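(* Let $\Phi\in C^\infty(\mathbb{R}^d)$ be real-valued and $V\subset\mathbb{R}^d$ open, with $\mathcal{M}_k:=\sum_{2\leq|\alpha|\leq k}\sup_{\xi\in V}|D^\alpha_\xi\Phi(\xi)|$ for $k\geq2$ and $\mathcal{M}_1:=1$. Let $A=(A_1,\dots,A_d)$ with $A_i=\frac{\partial_i\Phi}{|\nabla\Phi|^2}$ on the set where $\nabla\Phi\neq0$, let $\mathcal{L}=A\cdot\nabla$ and let ${}^t\mathcal{L}$ be its transpose, ${}^t\mathcal{L}u=-\sum_{i=1}^d\partial_i(A_iu)$. Then for every $N\in\mathbb{N}$ one can write $$({}^t\mathcal{L})^N=\sum_{|\alpha|\leq N}c_{\alpha,N}\partial^\alpha$$ with smooth coefficients $c_{\alpha,N}$ on $\{\nabla\Phi\neq0\}$ such that, for all multi-indices $\alpha$ with $|\alpha|\le N$ and $\beta$, there is a non-decreasing function $\mathcal{F}:\mathbb{R}^+\to\mathbb{R}^+$ (depending only on $d,N,\alpha,\beta$) with, for all $\xi\in V$ with $\nabla\Phi(\xi)\neq0$, $$|\partial^\beta_\xi c_{\alpha,N}(\xi)|\leq\mathcal{F}(\mathcal{M}_{N-|\alpha|+|\beta|+1})\sum_{k=N}^{2N-|\alpha|+|\beta|}\frac{1}{|\nabla\Phi(\xi)|^k}.$$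
   Context: $\partial^\alpha$ denotes the partial derivative of multi-index $\alpha$; $\mathcal{M}_k$ is assumed finite for the relevant $k$. *)

theory Defs
  imports "HOL-Analysis.Analysis"
begin

text \<open>Functions on R^d are modelled as functions on real^'n (d = CARD('n)).
Partial derivative in direction of the i-th coordinate axis.\<close>

definition pd :: "'n::finite \<Rightarrow> (real^'n \<Rightarrow> real) \<Rightarrow> real^'n \<Rightarrow> real" where
  "pd i f x = deriv (\<lambda>t. f (x + t *\<^sub>R axis i 1)) 0"

fun pderivs :: "'n::finite list \<Rightarrow> (real^'n \<Rightarrow> real) \<Rightarrow> real^'n \<Rightarrow> real" where
  "pderivs [] f = f"
| "pderivs (i # is) f = pd i (pderivs is f)"

definition smooth_on :: "(real^'n::finite) set \<Rightarrow> (real^'n \<Rightarrow> real) \<Rightarrow> bool" where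
  "smooth_on S f \<longleftrightarrow>
     (\<forall>is. continuous_on S (pderivs is f) \<and>
       (\<forall>i. \<forall>x\<in>S. (\<lambda>t. pderivs is f (x + t *\<^sub>R axis i 1)) field_differentiable (at 0)))"

definition mlen :: "('n::finite \<Rightarrow> nat) \<Rightarrow> nat" where
  "mlen \<alpha> = (\<Sum>i\<in>UNIV. \<alpha> i)"

definition midx_list :: "('n::finite \<Rightarrow> nat) \<Rightarrow> 'n list" where
  "midx_list \<alpha> = (SOME l. \<forall>i. count_list l i = \<alpha> i)"

definition dpart :: "('n::finite \<Rightarrow> nat) \<Rightarrow> (real^'n \<Rightarrow> real) \<Rightarrow> real^'n \<Rightarrow> real" where
  "dpart \<alpha> f = pderivs (midx_list \<alpha>) f"

definition grad :: "(real^'n::finite \<Rightarrow> real) \<Rightarrow> real^'n \<Rightarrow> real^'n" where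
  "grad \<Phi> x = (\<chi> i. pd i \<Phi> x)"

definition Acoef :: "(real^'n::finite \<Rightarrow> real) \<Rightarrow> 'n \<Rightarrow> real^'n \<Rightarrow> real" where
  "Acoef \<Phi> i x = pd i \<Phi> x / (norm (grad \<Phi> x))\<^sup>2"

definition tL :: "(real^'n::finite \<Rightarrow> real) \<Rightarrow> (real^'n \<Rightarrow> real) \<Rightarrow> real^'n \<Rightarrow> real" where
  "tL \<Phi> u x = - (\<Sum>i\<in>UNIV. pd i (\<lambda>y. Acoef \<Phi> i y * u y) x)"

definition MM :: "(real^'n::finite \<Rightarrow> real) \<Rightarrow> (real^'n) set \<Rightarrow> nat \<Rightarrow> real" where
  "MM \<Phi> V k = (if k \<le> 1 then 1
     else (\<Sum>\<gamma>\<in>{\<gamma>::'n\<Rightarrow>nat. 2 \<le> mlen \<gamma> \<and> mlen \<gamma> \<le> k}. (SUP \<xi>\<in>V. \<bar>dpart \<gamma> \<Phi> \<xi>\<bar>)))"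

definition MM_finite :: "(real^'n::finite \<Rightarrow> real) \<Rightarrow> (real^'n) set \<Rightarrow> nat \<Rightarrow> bool" where
  "MM_finite \<Phi> V k = (\<forall>\<gamma>::'n\<Rightarrow>nat. 2 \<le> mlen \<gamma> \<and> mlen \<gamma> \<le> k \<longrightarrow>
       bdd_above ((\<lambda>\<xi>. \<bar>dpart \<gamma> \<Phi> \<xi>\<bar>) ` V))"

end

theory Submission
  imports Defs "HOL-Library.Multiset"
begin


definition ldiff :: "(real^'n::finite \<Rightarrow> real) \<Rightarrow> real^'n \<Rightarrow> 'n \<Rightarrow> bool" where
  "ldiff f x i \<longleftrightarrow> (\<lambda>t. f (x + t *\<^sub>R axis i 1)) field_differentiable (at 0)"

lemma ldiff_DERIV:
  "ldiff f x i \<Longrightarrow> ((\<lambda>t. f (x + t *\<^sub>R axis i 1)) has_field_derivative pd i f x) (at 0)"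
  unfolding ldiff_def pd_def by (simp add: DERIV_deriv_iff_field_differentiable)

lemma DERIV_pd:
  "((\<lambda>t. f (x + t *\<^sub>R axis i 1)) has_field_derivative D) (at 0) \<Longrightarrow> pd i f x = D \<and> ldiff f x i"
  unfolding ldiff_def pd_def by (auto simp: DERIV_imp_deriv field_differentiable_def)

lemma ev_line_in_open:
  fixes x v :: "'a::real_normed_vector"
  assumes "open S" "x \<in> S"
  shows "eventually (\<lambda>t::real. x + t *\<^sub>R v \<in> S) (nhds 0)"
proof -
  obtain e where e: "e > 0" "ball x e \<subseteq> S" using assms open_contains_ball by blast
  have "continuous (at 0) (\<lambda>t::real. x + t *\<^sub>R v)" by (intro continuous_intros)
  hence "((\<lambda>t::real. x + t *\<^sub>R v) \<longlongrightarrow> x) (at 0)" by (simp add: continuous_at)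
  hence "eventually (\<lambda>t. x + t *\<^sub>R v \<in> S) (at 0)"
    using assms topological_tendstoD by blast
  thus ?thesis using assms(2) unfolding eventually_at_filter
    by (elim eventually_mono) auto
qed

lemma pd_local:
  assumes "open S" "x \<in> S" "\<And>y. y \<in> S \<Longrightarrow> f y = g y"
  shows "pd i f x = pd i g x"
  unfolding pd_def
  by (rule deriv_cong_ev) (use ev_line_in_open[OF assms(1,2), of "axis i 1"] assms(3) in \<open>auto elim: eventually_mono\<close>)

lemma ldiff_local:
  assumes "open S" "x \<in> S" "\<And>y. y \<in> S \<Longrightarrow> f y = g y" "ldiff f x i"
  shows "ldiff g x i"
proof -
  have ev: "eventually (\<lambda>t. f (x + t *\<^sub>R axis i 1) = g (x + t *\<^sub>R axis i 1)) (nhds 0)"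
    using ev_line_in_open[OF assms(1,2), of "axis i 1"] assms(3) by (auto elim: eventually_mono)
  from assms(4) obtain D where "((\<lambda>t. f (x + t *\<^sub>R axis i 1)) has_field_derivative D) (at 0)"
    unfolding ldiff_def field_differentiable_def by blast
  hence "((\<lambda>t. g (x + t *\<^sub>R axis i 1)) has_field_derivative D) (at 0)"
    using DERIV_cong_ev[OF refl ev refl] by simp
  thus ?thesis unfolding ldiff_def field_differentiable_def by blast
qed

lemma pd_const: "pd i (\<lambda>y. c) x = 0"
  using DERIV_pd[of "\<lambda>y. c" x i 0] by simp

lemma ldiff_const: "ldiff (\<lambda>y. c) x i"
  using DERIV_pd[of "\<lambda>y. c" x i 0] by simp

lemma pd_add:
  assumes "ldiff f x i" "ldiff g x i"
  shows "pd i (\<lambda>y. f y + g y) x = pd i f x + pd i g x \<and> ldiff (\<lambda>y. f y + g y) x i"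
  by (rule DERIV_pd) (intro derivative_intros ldiff_DERIV assms)

lemma pd_diff:
  assumes "ldiff f x i" "ldiff g x i"
  shows "pd i (\<lambda>y. f y - g y) x = pd i f x - pd i g x \<and> ldiff (\<lambda>y. f y - g y) x i"
  by (rule DERIV_pd) (intro derivative_intros ldiff_DERIV assms)

lemma pd_minus:
  assumes "ldiff f x i"
  shows "pd i (\<lambda>y. - f y) x = - pd i f x \<and> ldiff (\<lambda>y. - f y) x i"
  by (rule DERIV_pd) (intro derivative_intros ldiff_DERIV assms)

lemma pd_mult:
  assumes "ldiff f x i" "ldiff g x i"
  shows "pd i (\<lambda>y. f y * g y) x = pd i f x * g x + f x * pd i g x \<and> ldiff (\<lambda>y. f y * g y) x i"
proof -
  have "((\<lambda>t. f (x + t *\<^sub>R axis i 1) * g (x + t *\<^sub>R axis i 1)) has_field_derivative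
     pd i f x * g x + f x * pd i g x) (at 0)"
    using DERIV_mult[OF ldiff_DERIV[OF assms(1)] ldiff_DERIV[OF assms(2)]] by (simp add: mult.commute)
  thus ?thesis by (intro DERIV_pd) simp
qed

lemma pd_inverse:
  assumes "ldiff f x i" "f x \<noteq> 0"
  shows "pd i (\<lambda>y. inverse (f y)) x = - (pd i f x * (inverse (f x) * inverse (f x)))
     \<and> ldiff (\<lambda>y. inverse (f y)) x i"
proof -
  have "((\<lambda>t. inverse (f (x + t *\<^sub>R axis i 1))) has_field_derivative
     - (pd i f x * (inverse (f (x + 0 *\<^sub>R axis i 1)) * inverse (f (x + 0 *\<^sub>R axis i 1))))) (at 0)"
    using DERIV_inverse_fun[OF ldiff_DERIV[OF assms(1)]] assms(2) by simp
  thus ?thesis by (intro DERIV_pd) simp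
qed

lemma pd_sum:
  assumes "finite A" "\<And>a. a \<in> A \<Longrightarrow> ldiff (f a) x i"
  shows "pd i (\<lambda>y. \<Sum>a\<in>A. f a y) x = (\<Sum>a\<in>A. pd i (f a) x) \<and> ldiff (\<lambda>y. \<Sum>a\<in>A. f a y) x i"
  by (rule DERIV_pd) (intro DERIV_sum ldiff_DERIV assms)


definition C0D1 :: "(real^'n::finite) set \<Rightarrow> (real^'n \<Rightarrow> real) \<Rightarrow> bool" where
  "C0D1 S h \<longleftrightarrow> continuous_on S h \<and> (\<forall>i. \<forall>x\<in>S. ldiff h x i)"

lemma smooth_on_C0D1: "smooth_on S f \<longleftrightarrow> (\<forall>l. C0D1 S (pderivs l f))"
  unfolding smooth_on_def C0D1_def ldiff_def by simp

lemma pderivs_append: "pderivs (xs @ ys) f = pderivs xs (pderivs ys f)"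
  by (induction xs) auto

lemma pderivs_local:
  assumes "open S" "\<And>y. y \<in> S \<Longrightarrow> f y = g y" "x \<in> S"
  shows "pderivs l f x = pderivs l g x"
  using assms(3)
proof (induction l arbitrary: x)
  case Nil thus ?case using assms(2) by simp
next
  case (Cons i l)
  thus ?case using pd_local[OF assms(1) Cons.prems, of "pderivs l f" "pderivs l g" i] by simp
qed

lemma C0D1_local:
  assumes "open S" "\<And>y. y \<in> S \<Longrightarrow> f y = g y" "C0D1 S f"
  shows "C0D1 S g"
proof -
  have "continuous_on S f" using assms(3) unfolding C0D1_def by blast
  hence "continuous_on S g" using continuous_on_cong[OF refl, of S f g] assms(2) by simp
  moreover have "ldiff g x i" if "x \<in> S" for x i
    by (rule ldiff_local[OF assms(1) that, of f g]) (use assms that in \<open>auto simp: C0D1_def\<close>)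
  ultimately show ?thesis unfolding C0D1_def by blast
qed

lemma smooth_local:
  assumes "open S" "\<And>y. y \<in> S \<Longrightarrow> f y = g y" "smooth_on S f"
  shows "smooth_on S g"
  unfolding smooth_on_C0D1
proof (intro allI)
  fix l :: "'a list"
  have c: "C0D1 S (pderivs l f)" using assms(3) unfolding smooth_on_C0D1 by blast
  have eq: "\<And>y. y \<in> S \<Longrightarrow> pderivs l f y = pderivs l g y"
    by (rule pderivs_local[OF assms(1,2)])
  from C0D1_local[of S "pderivs l f" "pderivs l g", OF assms(1) eq c] show "C0D1 S (pderivs l g)" .
qed

lemma smooth_pderivs: "smooth_on S f \<Longrightarrow> smooth_on S (pderivs l f)"
  unfolding smooth_on_C0D1 by (metis pderivs_append)

lemma smooth_pd: "smooth_on S f \<Longrightarrow> smooth_on S (pd i f)"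
  using smooth_pderivs[of S f "[i]"] by simp

lemma smooth_C0D1: "smooth_on S f \<Longrightarrow> C0D1 S f"
  unfolding smooth_on_C0D1 by (metis pderivs.simps(1))

lemma smooth_ldiff: "smooth_on S f \<Longrightarrow> x \<in> S \<Longrightarrow> ldiff f x i"
  using smooth_C0D1 C0D1_def by blast

lemma smooth_cont: "smooth_on S f \<Longrightarrow> continuous_on S f"
  using smooth_C0D1 C0D1_def by blast

lemma smooth_subset: "smooth_on S f \<Longrightarrow> T \<subseteq> S \<Longrightarrow> smooth_on T f"
  unfolding smooth_on_def by (meson continuous_on_subset subsetD)

lemma smooth_closure:
  assumes "open S" "\<And>h. h \<in> K \<Longrightarrow> C0D1 S h"
    "\<And>h i. h \<in> K \<Longrightarrow> \<exists>h'\<in>K. \<forall>x\<in>S. pd i h x = h' x"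
    "h \<in> K"
  shows "smooth_on S h"
proof -
  have *: "\<forall>h\<in>K. \<exists>h'\<in>K. \<forall>x\<in>S. pderivs l h x = h' x" for l
  proof (induction l)
    case Nil thus ?case by auto
  next
    case (Cons i l)
    show ?case
    proof
      fix h assume "h \<in> K"
      then obtain h' where h': "h' \<in> K" "\<forall>x\<in>S. pderivs l h x = h' x" using Cons by blast
      then obtain h'' where h'': "h'' \<in> K" "\<forall>x\<in>S. pd i h' x = h'' x" using assms(3) by blast
      have "pderivs (i # l) h x = h'' x" if "x \<in> S" for x
      proof -
        have "pderivs (i # l) h x = pd i (pderivs l h) x" by simp
        also have "\<dots> = pd i h' x" by (rule pd_local[OF assms(1) that]) (use h'(2) in blast)
        also have "\<dots> = h'' x" using h''(2) that by blast
        finally show ?thesis .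
      qed
      thus "\<exists>h'\<in>K. \<forall>x\<in>S. pderivs (i # l) h x = h' x" using h'' by blast
    qed
  qed
  show ?thesis unfolding smooth_on_C0D1
  proof
    fix l
    obtain h' where "h' \<in> K" "\<forall>x\<in>S. pderivs l h x = h' x" using * assms(4) by blast
    thus "C0D1 S (pderivs l h)" using C0D1_local[OF assms(1), of h' "pderivs l h"] assms(2)[of h'] by metis
  qed
qed

inductive_set alg :: "(real^'n::finite) set \<Rightarrow> (real^'n \<Rightarrow> real) set" for S where
  alg_smooth: "smooth_on S f \<Longrightarrow> f \<in> alg S"
| alg_add: "f \<in> alg S \<Longrightarrow> g \<in> alg S \<Longrightarrow> (\<lambda>x. f x + g x) \<in> alg S"
| alg_mult: "f \<in> alg S \<Longrightarrow> g \<in> alg S \<Longrightarrow> (\<lambda>x. f x * g x) \<in> alg S"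
| alg_minus: "f \<in> alg S \<Longrightarrow> (\<lambda>x. - f x) \<in> alg S"
| alg_inv: "smooth_on S f \<Longrightarrow> (\<forall>x\<in>S. f x \<noteq> 0) \<Longrightarrow> (\<lambda>x. inverse (f x)) \<in> alg S"

lemma alg_C0D1: "h \<in> alg S \<Longrightarrow> C0D1 S h"
proof (induction rule: alg.induct)
  case (alg_smooth f) thus ?case by (rule smooth_C0D1)
next
  case (alg_add f g)
  hence "continuous_on S f" "continuous_on S g" "\<forall>i. \<forall>x\<in>S. ldiff f x i" "\<forall>i. \<forall>x\<in>S. ldiff g x i"
    unfolding C0D1_def by blast+
  thus ?case unfolding C0D1_def using pd_add[THEN conjunct2] continuous_on_add by blast
next
  case (alg_mult f g)
  hence "continuous_on S f" "continuous_on S g" "\<forall>i. \<forall>x\<in>S. ldiff f x i" "\<forall>i. \<forall>x\<in>S. ldiff g x i"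
    unfolding C0D1_def by blast+
  thus ?case unfolding C0D1_def using pd_mult[THEN conjunct2] continuous_on_mult by blast
next
  case (alg_minus f)
  hence "continuous_on S f" "\<forall>i. \<forall>x\<in>S. ldiff f x i"
    unfolding C0D1_def by blast+
  thus ?case unfolding C0D1_def using pd_minus[THEN conjunct2] continuous_on_minus by blast
next
  case (alg_inv f)
  have "continuous_on S (\<lambda>x. inverse (f x))" using alg_inv smooth_cont by (auto intro!: continuous_intros)
  moreover have "ldiff (\<lambda>x. inverse (f x)) x i" if "x \<in> S" for x i
    using pd_inverse[THEN conjunct2] smooth_ldiff alg_inv that by blast
  ultimately show ?case unfolding C0D1_def by blast
qed

lemma alg_pd: "h \<in> alg S \<Longrightarrow> \<exists>h'\<in>alg S. \<forall>x\<in>S. pd i h x = h' x"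
proof (induction rule: alg.induct)
  case (alg_smooth f) thus ?case using smooth_pd alg.alg_smooth by blast
next
  case (alg_add f g)
  then obtain f' g' where fg: "f' \<in> alg S" "g' \<in> alg S" "\<forall>x\<in>S. pd i f x = f' x" "\<forall>x\<in>S. pd i g x = g' x"
    by blast
  have ld: "\<forall>x\<in>S. ldiff f x i \<and> ldiff g x i" using alg_add alg_C0D1 C0D1_def by blast
  have "\<forall>x\<in>S. pd i (\<lambda>a. f a + g a) x = f' x + g' x"
  proof
    fix x assume x: "x \<in> S"
    show "pd i (\<lambda>a. f a + g a) x = f' x + g' x"
      using pd_add[of f x i g] ld fg x by simp
  qed
  moreover have "(\<lambda>x. f' x + g' x) \<in> alg S"
    using fg by (intro alg.alg_add)
  ultimately show ?case by (intro bexI[of _ "\<lambda>x. f' x + g' x"]) simp_all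
next
  case (alg_mult f g)
  then obtain f' g' where fg: "f' \<in> alg S" "g' \<in> alg S" "\<forall>x\<in>S. pd i f x = f' x" "\<forall>x\<in>S. pd i g x = g' x"
    by blast
  have ld: "\<forall>x\<in>S. ldiff f x i \<and> ldiff g x i" using alg_mult alg_C0D1 C0D1_def by blast
  have "\<forall>x\<in>S. pd i (\<lambda>a. f a * g a) x = f' x * g x + f x * g' x"
  proof
    fix x assume x: "x \<in> S"
    show "pd i (\<lambda>a. f a * g a) x = f' x * g x + f x * g' x"
      using pd_mult[of f x i g] ld fg x by simp
  qed
  moreover have "(\<lambda>x. f' x * g x + f x * g' x) \<in> alg S"
    using fg alg_mult.hyps by (intro alg.alg_add alg.alg_mult)
  ultimately show ?case by (intro bexI[of _ "\<lambda>x. f' x * g x + f x * g' x"]) simp_all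
next
  case (alg_minus f)
  then obtain f' where fg: "f' \<in> alg S" "\<forall>x\<in>S. pd i f x = f' x" by blast
  have ld: "\<forall>x\<in>S. ldiff f x i" using alg_minus alg_C0D1 C0D1_def by blast
  have "\<forall>x\<in>S. pd i (\<lambda>a. - f a) x = - f' x"
  proof
    fix x assume x: "x \<in> S"
    show "pd i (\<lambda>a. - f a) x = - f' x"
      using pd_minus[of f x i] ld fg x by simp
  qed
  moreover have "(\<lambda>x. - f' x) \<in> alg S"
    using fg by (intro alg.alg_minus)
  ultimately show ?case by (intro bexI[of _ "\<lambda>x. - f' x"]) simp_all
next
  case (alg_inv f)
  have "(\<lambda>x. - (pd i f x * (inverse (f x) * inverse (f x)))) \<in> alg S"
    by (intro alg.intros smooth_pd alg_inv)
  moreover have "\<forall>x\<in>S. pd i (\<lambda>a. inverse (f a)) x = - (pd i f x * (inverse (f x) * inverse (f x)))"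
    using pd_inverse[THEN conjunct1] alg_inv smooth_ldiff by blast
  ultimately show ?case by (intro bexI[of _ "\<lambda>x. - (pd i f x * (inverse (f x) * inverse (f x)))"]) simp_all
qed

lemma alg_smooth': "open S \<Longrightarrow> h \<in> alg S \<Longrightarrow> smooth_on S h"
  by (rule smooth_closure[where K="alg S"]) (auto intro: alg_C0D1 alg_pd)

lemma smooth_add: "open S \<Longrightarrow> smooth_on S f \<Longrightarrow> smooth_on S g \<Longrightarrow> smooth_on S (\<lambda>x. f x + g x)"
  by (rule alg_smooth', assumption, rule alg_add, (rule alg.alg_smooth, assumption)+)
lemma smooth_mult: "open S \<Longrightarrow> smooth_on S f \<Longrightarrow> smooth_on S g \<Longrightarrow> smooth_on S (\<lambda>x. f x * g x)"
  by (rule alg_smooth', assumption, rule alg_mult, (rule alg.alg_smooth, assumption)+)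
lemma smooth_minus: "open S \<Longrightarrow> smooth_on S f \<Longrightarrow> smooth_on S (\<lambda>x. - f x)"
  by (rule alg_smooth', assumption, rule alg_minus, (rule alg.alg_smooth, assumption)+)
lemma smooth_inverse: "open S \<Longrightarrow> smooth_on S f \<Longrightarrow> \<forall>x\<in>S. f x \<noteq> 0 \<Longrightarrow> smooth_on S (\<lambda>x. inverse (f x))"
  by (rule alg_smooth', assumption, rule alg_inv)

lemma pderivs_const: "pderivs l (\<lambda>x. c) = (if l = [] then (\<lambda>x. c) else (\<lambda>x. 0))"
proof (induction l)
  case (Cons i l) thus ?case by (auto simp: pd_const[abs_def])
qed simp

lemma smooth_const: "smooth_on S (\<lambda>x. c)"
  unfolding smooth_on_def
  by (metis continuous_on_const ldiff_const ldiff_def pderivs_const)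

lemma smooth_sum:
  assumes "open S" "finite A" "\<And>a. a \<in> A \<Longrightarrow> smooth_on S (f a)"
  shows "smooth_on S (\<lambda>x. \<Sum>a\<in>A. f a x)"
  using assms(2,3)
proof (induction A rule: finite_induct)
  case empty thus ?case using smooth_const[of S 0] by simp
next
  case (insert a A)
  thus ?case using smooth_add[OF assms(1), of "f a" "\<lambda>x. \<Sum>a\<in>A. f a x"] by simp
qed


lemma line_deriv:
  assumes "ldiff f (x + a *\<^sub>R axis i 1) i"
  shows "((\<lambda>t. f (x + t *\<^sub>R axis i 1)) has_field_derivative pd i f (x + a *\<^sub>R axis i 1)) (at a)"
proof -
  have "((\<lambda>t. f ((x + a *\<^sub>R axis i 1) + t *\<^sub>R axis i 1)) has_field_derivative pd i f (x + a *\<^sub>R axis i 1)) (at 0)"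
    by (rule ldiff_DERIV[OF assms])
  moreover have "(\<lambda>t. f ((x + a *\<^sub>R axis i 1) + t *\<^sub>R axis i 1)) = (\<lambda>t. (\<lambda>t. f (x + t *\<^sub>R axis i 1)) (t + a))"
    by (simp add: algebra_simps)
  ultimately have "((\<lambda>t. (\<lambda>t. f (x + t *\<^sub>R axis i 1)) (t + a)) has_field_derivative pd i f (x + a *\<^sub>R axis i 1)) (at 0)"
    by simp
  thus ?thesis using DERIV_shift[of "\<lambda>t. f (x + t *\<^sub>R axis i 1)" _ 0 a] by simp
qed

lemma mvt_line:
  assumes "s > 0" "\<And>\<sigma>. 0 \<le> \<sigma> \<Longrightarrow> \<sigma> \<le> s \<Longrightarrow> ldiff f (z + \<sigma> *\<^sub>R axis i 1) i"
  shows "\<exists>\<sigma>. 0 < \<sigma> \<and> \<sigma> < s \<and> f (z + s *\<^sub>R axis i 1) - f z = s * pd i f (z + \<sigma> *\<^sub>R axis i 1)"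
proof -
  have "\<forall>t. 0 \<le> t \<and> t \<le> s \<longrightarrow> ((\<lambda>t. f (z + t *\<^sub>R axis i 1)) has_field_derivative pd i f (z + t *\<^sub>R axis i 1)) (at t)"
    using line_deriv assms(2) by blast
  thus ?thesis
    using MVT2[of 0 s "\<lambda>t. f (z + t *\<^sub>R axis i 1)" "\<lambda>t. pd i f (z + t *\<^sub>R axis i 1)"] assms(1)
    by auto
qed

lemma shift_line: "(\<lambda>t. h (y + t *\<^sub>R e + w)) = (\<lambda>t. h ((y + w) + t *\<^sub>R (e::real^'n::finite)))"
  by (simp add: algebra_simps)

lemma pd_shift: "pd i (\<lambda>y. h (y + w)) y = pd i h (y + w)"
  unfolding pd_def by (simp add: shift_line)

lemma ldiff_shift: "ldiff h (y + w) i \<Longrightarrow> ldiff (\<lambda>y. h (y + w)) y i"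
  unfolding ldiff_def by (simp add: shift_line)

lemma delta_lemma:
  assumes "open S" "smooth_on S h" "s > 0"
    and box: "\<And>\<sigma> \<tau>. 0 \<le> \<sigma> \<Longrightarrow> \<sigma> \<le> s \<Longrightarrow> 0 \<le> \<tau> \<Longrightarrow> \<tau> \<le> s \<Longrightarrow> x + \<sigma> *\<^sub>R axis i 1 + \<tau> *\<^sub>R axis j 1 \<in> S"
  shows "\<exists>\<sigma> \<tau>. 0 < \<sigma> \<and> \<sigma> < s \<and> 0 < \<tau> \<and> \<tau> < s \<and>
     h (x + s *\<^sub>R axis i 1 + s *\<^sub>R axis j 1) - h (x + s *\<^sub>R axis i 1) - h (x + s *\<^sub>R axis j 1) + h x
       = s * s * pd j (pd i h) (x + \<sigma> *\<^sub>R axis i 1 + \<tau> *\<^sub>R axis j 1)"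
proof -
  define ei :: "real^'a" where "ei = axis i 1"
  define ej :: "real^'a" where "ej = axis j 1"
  define F where "F = (\<lambda>y. h (y + s *\<^sub>R ej) - h y)"
  have inS: "x + \<sigma> *\<^sub>R ei + \<tau> *\<^sub>R ej \<in> S" if "0 \<le> \<sigma>" "\<sigma> \<le> s" "0 \<le> \<tau>" "\<tau> \<le> s" for \<sigma> \<tau>
    using box that unfolding ei_def ej_def by blast
  have ldF: "ldiff F (x + \<sigma> *\<^sub>R ei) i \<and>
      pd i F (x + \<sigma> *\<^sub>R ei) = pd i h (x + \<sigma> *\<^sub>R ei + s *\<^sub>R ej) - pd i h (x + \<sigma> *\<^sub>R ei)"
    if "0 \<le> \<sigma>" "\<sigma> \<le> s" for \<sigma>
  proof -
    have a: "x + \<sigma> *\<^sub>R ei + s *\<^sub>R ej \<in> S" using inS[of \<sigma> s] that assms(3) by simp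
    have b: "x + \<sigma> *\<^sub>R ei \<in> S" using inS[of \<sigma> 0] that assms(3) by simp
    have l1: "ldiff (\<lambda>y. h (y + s *\<^sub>R ej)) (x + \<sigma> *\<^sub>R ei) i"
      by (rule ldiff_shift) (use smooth_ldiff[OF assms(2) a] in simp)
    have l2: "ldiff h (x + \<sigma> *\<^sub>R ei) i" using smooth_ldiff[OF assms(2) b] .
    show ?thesis using pd_diff[OF l1 l2] unfolding F_def by (simp add: pd_shift)
  qed
  obtain \<sigma> where \<sigma>: "0 < \<sigma>" "\<sigma> < s" "F (x + s *\<^sub>R ei) - F x = s * pd i F (x + \<sigma> *\<^sub>R ei)"
    using mvt_line[OF assms(3), of F x i] ldF unfolding ei_def by blast
  have sm: "smooth_on S (pd i h)" using smooth_pd[OF assms(2)] .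
  obtain \<tau> where \<tau>: "0 < \<tau>" "\<tau> < s" "pd i h (x + \<sigma> *\<^sub>R ei + s *\<^sub>R ej) - pd i h (x + \<sigma> *\<^sub>R ei)
      = s * pd j (pd i h) (x + \<sigma> *\<^sub>R ei + \<tau> *\<^sub>R ej)"
  proof -
    have "\<exists>\<tau>. 0 < \<tau> \<and> \<tau> < s \<and> pd i h ((x + \<sigma> *\<^sub>R ei) + s *\<^sub>R axis j 1) - pd i h (x + \<sigma> *\<^sub>R ei)
      = s * pd j (pd i h) ((x + \<sigma> *\<^sub>R ei) + \<tau> *\<^sub>R axis j 1)"
      by (rule mvt_line[OF assms(3)]) (use smooth_ldiff[OF sm] inS \<sigma> in \<open>auto simp: ej_def\<close>)
    thus ?thesis using that unfolding ej_def by blast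
  qed
  have "h (x + s *\<^sub>R ei + s *\<^sub>R ej) - h (x + s *\<^sub>R ei) - h (x + s *\<^sub>R ej) + h x
      = F (x + s *\<^sub>R ei) - F x" unfolding F_def by (simp add: algebra_simps)
  also have "\<dots> = s * s * pd j (pd i h) (x + \<sigma> *\<^sub>R ei + \<tau> *\<^sub>R ej)"
    using \<sigma>(3) ldF[of \<sigma>] \<sigma>(1,2) \<tau>(3) by simp
  finally show ?thesis using \<sigma> \<tau> unfolding ei_def ej_def by blast
qed

lemma abs_contra: "\<bar>q - ax\<bar> < \<bar>ax - bx\<bar>/2 \<Longrightarrow> \<bar>p - bx\<bar> < \<bar>ax - bx\<bar>/2 \<Longrightarrow> p = q \<Longrightarrow> False"
  for p q ax bx :: real by (auto simp: abs_if split: if_splits)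

lemma pd_swap:
  assumes "open S" "smooth_on S h" "x \<in> S"
  shows "pd i (pd j h) x = pd j (pd i h) x"
proof (rule ccontr)
  assume ne: "pd i (pd j h) x \<noteq> pd j (pd i h) x"
  define a where "a = pd i (pd j h)"
  define b where "b = pd j (pd i h)"
  define d where "d = \<bar>a x - b x\<bar>"
  have d: "d > 0" using ne unfolding d_def a_def b_def by simp
  have ca: "continuous_on S a" using smooth_cont[OF smooth_pd[OF smooth_pd[OF assms(2)]]] unfolding a_def .
  have cb: "continuous_on S b" using smooth_cont[OF smooth_pd[OF smooth_pd[OF assms(2)]]] unfolding b_def .
  have "isCont a x" "isCont b x" using ca cb assms continuous_on_eq_continuous_at by blast+
  hence ea: "\<forall>e>0. \<exists>r>0. \<forall>y. dist y x < r \<longrightarrow> dist (a y) (a x) < e"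
    and eb: "\<forall>e>0. \<exists>r>0. \<forall>y. dist y x < r \<longrightarrow> dist (b y) (b x) < e"
    unfolding continuous_at_eps_delta by auto
  have d2: "d/2 > 0" using d by simp
  obtain ra where ra: "ra > 0" "\<forall>y. dist y x < ra \<longrightarrow> dist (a y) (a x) < d/2"
    using ea d2 by blast
  obtain rb where rb: "rb > 0" "\<forall>y. dist y x < rb \<longrightarrow> dist (b y) (b x) < d/2"
    using eb d2 by blast
  obtain r0 where r0: "r0 > 0" "ball x r0 \<subseteq> S" using assms(1,3) open_contains_ball by blast
  define r where "r = min r0 (min ra rb)"
  have r: "r > 0" "ball x r \<subseteq> S" using r0 ra rb unfolding r_def by auto
  define s where "s = r / 3"
  have s: "s > 0" using r unfolding s_def by simp
  have near: "dist (x + \<sigma> *\<^sub>R axis k 1 + \<tau> *\<^sub>R axis l 1) x < r"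
    if "0 \<le> \<sigma>" "\<sigma> \<le> s" "0 \<le> \<tau>" "\<tau> \<le> s" for \<sigma> \<tau> k l
  proof -
    have "dist (x + \<sigma> *\<^sub>R axis k 1 + \<tau> *\<^sub>R axis l 1) x = norm (\<sigma> *\<^sub>R axis k (1::real) + \<tau> *\<^sub>R axis l 1)"
      by (simp add: dist_norm)
    also have "\<dots> \<le> norm (\<sigma> *\<^sub>R axis k (1::real)) + norm (\<tau> *\<^sub>R axis l (1::real))" by (rule norm_triangle_ineq)
    also have "\<dots> = \<sigma> + \<tau>" using that by simp
    also have "\<dots> < r" using that s_def r by simp
    finally show ?thesis .
  qed
  have box: "x + \<sigma> *\<^sub>R axis k 1 + \<tau> *\<^sub>R axis l 1 \<in> S"
    if "0 \<le> \<sigma>" "\<sigma> \<le> s" "0 \<le> \<tau>" "\<tau> \<le> s" for \<sigma> \<tau> k l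
    using near[OF that, of k l] r(2) by (auto simp: dist_commute)
  obtain \<sigma>1 \<tau>1 where 1: "0 < \<sigma>1" "\<sigma>1 < s" "0 < \<tau>1" "\<tau>1 < s"
     "h (x + s *\<^sub>R axis i 1 + s *\<^sub>R axis j 1) - h (x + s *\<^sub>R axis i 1) - h (x + s *\<^sub>R axis j 1) + h x
       = s * s * b (x + \<sigma>1 *\<^sub>R axis i 1 + \<tau>1 *\<^sub>R axis j 1)"
    using delta_lemma[OF assms(1,2) s, of x i j] box unfolding b_def by blast
  obtain \<sigma>2 \<tau>2 where 2: "0 < \<sigma>2" "\<sigma>2 < s" "0 < \<tau>2" "\<tau>2 < s"
     "h (x + s *\<^sub>R axis j 1 + s *\<^sub>R axis i 1) - h (x + s *\<^sub>R axis j 1) - h (x + s *\<^sub>R axis i 1) + h x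
       = s * s * a (x + \<sigma>2 *\<^sub>R axis j 1 + \<tau>2 *\<^sub>R axis i 1)"
    using delta_lemma[OF assms(1,2) s, of x j i] box unfolding a_def by blast
  have "s * s * b (x + \<sigma>1 *\<^sub>R axis i 1 + \<tau>1 *\<^sub>R axis j 1) = s * s * a (x + \<sigma>2 *\<^sub>R axis j 1 + \<tau>2 *\<^sub>R axis i 1)"
    using 1(5) 2(5) by (simp add: algebra_simps)
  hence eq: "b (x + \<sigma>1 *\<^sub>R axis i 1 + \<tau>1 *\<^sub>R axis j 1) = a (x + \<sigma>2 *\<^sub>R axis j 1 + \<tau>2 *\<^sub>R axis i 1)"
    using s by simp
  have "dist (a (x + \<sigma>2 *\<^sub>R axis j 1 + \<tau>2 *\<^sub>R axis i 1)) (a x) < d/2"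
    using ra(2) near[of \<sigma>2 \<tau>2 j i] 2 r_def by auto
  moreover have "dist (b (x + \<sigma>1 *\<^sub>R axis i 1 + \<tau>1 *\<^sub>R axis j 1)) (b x) < d/2"
    using rb(2) near[of \<sigma>1 \<tau>1 i j] 1 r_def by auto
  ultimately show False using eq abs_contra unfolding d_def dist_real_def by blast
qed


lemma pd_pderivs_move:
  assumes "open S" "smooth_on S f" "x \<in> S"
  shows "pd i (pderivs (ys @ zs) f) x = pderivs (ys @ i # zs) f x"
  using assms(3)
proof (induction ys arbitrary: x)
  case Nil thus ?case by simp
next
  case (Cons y ys)
  have sm: "smooth_on S (pderivs (ys @ zs) f)" by (rule smooth_pderivs[OF assms(2)])
  have "pd i (pderivs ((y # ys) @ zs) f) x = pd i (pd y (pderivs (ys @ zs) f)) x" by simp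
  also have "\<dots> = pd y (pd i (pderivs (ys @ zs) f)) x" by (rule pd_swap[OF assms(1) sm Cons.prems])
  also have "\<dots> = pd y (pderivs (ys @ i # zs) f) x"
    by (rule pd_local[OF assms(1) Cons.prems]) (rule Cons.IH)
  finally show ?case by simp
qed

lemma pderivs_perm:
  assumes "open S" "smooth_on S f" "mset l1 = mset l2" "x \<in> S"
  shows "pderivs l1 f x = pderivs l2 f x"
  using assms(3,4)
proof (induction l1 arbitrary: l2 x)
  case Nil thus ?case by simp
next
  case (Cons i r)
  have "i \<in> set l2" using Cons.prems(1) by (metis list.set_intros(1) mset_eq_setD)
  then obtain ys zs where l2: "l2 = ys @ i # zs" by (meson split_list)
  have m: "mset r = mset (ys @ zs)" using Cons.prems(1) l2 by simp
  have "pderivs (i # r) f x = pd i (pderivs r f) x" by simp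
  also have "\<dots> = pd i (pderivs (ys @ zs) f) x"
    by (rule pd_local[OF assms(1) Cons.prems(2)]) (rule Cons.IH[OF m])
  also have "\<dots> = pderivs l2 f x" using pd_pderivs_move[OF assms(1,2) Cons.prems(2)] l2 by simp
  finally show ?case .
qed

definition cnt :: "'n::finite list \<Rightarrow> 'n \<Rightarrow> nat" where
  "cnt l = (\<lambda>i. count_list l i)"

lemma midx_list_count: "count_list (midx_list \<alpha>) i = \<alpha> i"
proof -
  have fin: "finite {x. \<alpha> x > 0}" by simp
  obtain l where "mset l = Abs_multiset \<alpha>" using ex_mset by blast
  hence "\<forall>i. count_list l i = \<alpha> i"
  proof (intro allI)
    fix i assume l: "mset l = Abs_multiset \<alpha>"
    have "count_list l i = count (mset l) i" by (simp add: count_mset)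
    also have "\<dots> = count (Abs_multiset \<alpha>) i" by (simp add: l)
    also have "\<dots> = \<alpha> i" using count_Abs_multiset[OF fin] by simp
    finally show "count_list l i = \<alpha> i" .
  qed
  hence "\<exists>l. \<forall>i. count_list l i = \<alpha> i" by blast
  from someI_ex[OF this] have "\<forall>i. count_list (midx_list \<alpha>) i = \<alpha> i"
    unfolding midx_list_def .
  thus ?thesis by blast
qed

lemma cnt_midx_list: "cnt (midx_list \<alpha>) = \<alpha>"
  unfolding cnt_def by (rule ext, rule midx_list_count)

lemma mset_eq_cnt: "cnt l1 = cnt l2 \<Longrightarrow> mset l1 = mset l2"
  unfolding cnt_def by (metis count_mset multiset_eqI)

lemma pderivs_dpart:
  assumes "open S" "smooth_on S f" "x \<in> S"
  shows "pderivs l f x = dpart (cnt l) f x"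
  unfolding dpart_def
  by (rule pderivs_perm[OF assms(1,2) _ assms(3)]) (rule mset_eq_cnt, simp add: cnt_midx_list)

lemma mlen_cnt: "mlen (cnt l) = length l"
proof (induction l)
  case Nil thus ?case by (simp add: mlen_def cnt_def)
next
  case (Cons a l)
  have "mlen (cnt (a # l)) = (\<Sum>i\<in>UNIV. (if a = i then 1 else 0) + count_list l i)"
    unfolding mlen_def cnt_def by (rule sum.cong) auto
  also have "\<dots> = (\<Sum>i\<in>UNIV. (if a = i then 1 else 0::nat)) + mlen (cnt l)"
    by (simp add: sum.distrib mlen_def cnt_def)
  also have "\<dots> = 1 + length l" using Cons by simp
  finally show ?case by simp
qed

lemma length_midx_list: "length (midx_list \<alpha>) = mlen \<alpha>"
  using mlen_cnt[of "midx_list \<alpha>"] unfolding cnt_midx_list by simp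

definition Ls :: "nat \<Rightarrow> 'n::finite list set" where
  "Ls N = {l. length l \<le> N}"

lemma finite_Ls: "finite (Ls N :: 'n::finite list set)"
  using finite_lists_length_le[of "UNIV::'n set" N] unfolding Ls_def by simp

lemma mlen_set_image: "{\<alpha>::'n::finite \<Rightarrow> nat. mlen \<alpha> \<le> N} = cnt ` Ls N"
proof
  show "{\<alpha>::'n \<Rightarrow> nat. mlen \<alpha> \<le> N} \<subseteq> cnt ` Ls N"
  proof (rule subsetI)
    fix \<alpha> assume "\<alpha> \<in> {\<alpha>::'n \<Rightarrow> nat. mlen \<alpha> \<le> N}"
    hence "midx_list \<alpha> \<in> Ls N" by (simp add: Ls_def length_midx_list)
    thus "\<alpha> \<in> cnt ` Ls N" by (rule rev_image_eqI) (simp add: cnt_midx_list)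
  qed
  show "cnt ` Ls N \<subseteq> {\<alpha>::'n \<Rightarrow> nat. mlen \<alpha> \<le> N}" by (auto simp: Ls_def mlen_cnt)
qed

lemma finite_mlen_le: "finite {\<alpha>::'n::finite \<Rightarrow> nat. mlen \<alpha> \<le> N}"
  unfolding mlen_set_image by (rule finite_imageI[OF finite_Ls])


definition Gs :: "(real^'n::finite \<Rightarrow> real) \<Rightarrow> (real^'n) set" where
  "Gs \<Phi> = {x. grad \<Phi> x \<noteq> 0}"

definition PP :: "int \<Rightarrow> int \<Rightarrow> real \<Rightarrow> real" where
  "PP a b r = (\<Sum>k\<in>{a..b}. (1/r) powi k)"

definition qq :: "(real^'n::finite \<Rightarrow> real) \<Rightarrow> real^'n \<Rightarrow> real" where
  "qq \<Phi> x = (\<Sum>j\<in>UNIV. pd j \<Phi> x * pd j \<Phi> x)"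

lemma norm_grad_sq: "(norm (grad \<Phi> x))\<^sup>2 = qq \<Phi> x"
  unfolding power2_norm_eq_inner inner_vec_def grad_def qq_def by simp

lemma grad_comp: "grad \<Phi> x $ j = pd j \<Phi> x"
  unfolding grad_def by simp

lemma pd_le_norm_grad: "\<bar>pd j \<Phi> x\<bar> \<le> norm (grad \<Phi> x)"
  using component_le_norm_cart[of "grad \<Phi> x" j] by (simp add: grad_comp)

lemma Gs_qq: "Gs \<Phi> = {x. qq \<Phi> x \<noteq> 0}"
  unfolding Gs_def by (simp flip: norm_grad_sq)

lemma smooth_qq: "smooth_on UNIV \<Phi> \<Longrightarrow> smooth_on UNIV (qq \<Phi>)"
  unfolding qq_def[abs_def]
  by (intro smooth_sum smooth_mult smooth_pd) auto

lemma open_Gs: "smooth_on UNIV \<Phi> \<Longrightarrow> open (Gs \<Phi>)"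
  unfolding Gs_qq by (rule open_Collect_neq) (auto intro: smooth_cont smooth_qq)

lemma PP_nonneg: "r > 0 \<Longrightarrow> 0 \<le> PP a b r"
  unfolding PP_def by (intro sum_nonneg) simp

lemma PP_mono: "r > 0 \<Longrightarrow> a' \<le> a \<Longrightarrow> b \<le> b' \<Longrightarrow> PP a b r \<le> PP a' b' r"
  unfolding PP_def by (intro sum_mono2) auto

lemma PP_term: "r > 0 \<Longrightarrow> a \<le> k \<Longrightarrow> k \<le> b \<Longrightarrow> (1/r) powi k \<le> PP a b r"
  unfolding PP_def by (rule member_le_sum) auto

lemma PP_shift: "r > 0 \<Longrightarrow> PP a b r * (1/r) powi k = PP (a+k) (b+k) r"
proof -
  assume r: "r > 0"
  have "PP a b r * (1/r) powi k = (\<Sum>j\<in>{a..b}. (1/r) powi (j + k))"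
    unfolding PP_def sum_distrib_right using r by (simp add: power_int_add)
  also have "\<dots> = (\<Sum>j\<in>(\<lambda>j. j + k) ` {a..b}. (1/r) powi j)"
    by (subst sum.reindex) (auto simp: inj_on_def)
  also have "(\<lambda>j. j + k) ` {a..b} = {a+k..b+k}"
  proof -
    have "x \<in> (\<lambda>j. j + k) ` {a..b}" if "x \<in> {a+k..b+k}" for x
      using that by (intro rev_image_eqI[of "x - k"]) auto
    thus ?thesis by auto
  qed
  finally show ?thesis unfolding PP_def .
qed

lemma PP_mult:
  assumes "r > 0"
  shows "PP a1 b1 r * PP a2 b2 r \<le> real (card {a2..b2}) * PP (a1+a2) (b1+b2) r"
proof -
  have "PP a1 b1 r * PP a2 b2 r = (\<Sum>k\<in>{a2..b2}. PP a1 b1 r * (1/r) powi k)"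
    unfolding PP_def[of a2] sum_distrib_left ..
  also have "\<dots> = (\<Sum>k\<in>{a2..b2}. PP (a1+k) (b1+k) r)"
    using PP_shift[OF assms] by simp
  also have "\<dots> \<le> (\<Sum>k\<in>{a2..b2}. PP (a1+a2) (b1+b2) r)"
    by (rule sum_mono) (rule PP_mono[OF assms]; simp)
  also have "\<dots> = real (card {a2..b2}) * PP (a1+a2) (b1+b2) r" by simp
  finally show ?thesis .
qed

lemma MM_finite_mono: "k1 \<le> k2 \<Longrightarrow> MM_finite \<Phi> V k2 \<Longrightarrow> MM_finite \<Phi> V k1"
  unfolding MM_finite_def by auto

lemma finite_gamma: "finite {\<gamma>::'n::finite\<Rightarrow>nat. 2 \<le> mlen \<gamma> \<and> mlen \<gamma> \<le> k}"
  by (rule finite_subset[OF _ finite_mlen_le[of k]]) auto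

lemma SUP_term_nonneg:
  assumes "bdd_above ((\<lambda>\<xi>. \<bar>dpart \<gamma> \<Phi> \<xi>\<bar>) ` V)" "\<xi> \<in> V"
  shows "\<bar>dpart \<gamma> \<Phi> \<xi>\<bar> \<le> (SUP \<xi>\<in>V. \<bar>dpart \<gamma> \<Phi> \<xi>\<bar>)" "0 \<le> (SUP \<xi>\<in>V. \<bar>dpart \<gamma> \<Phi> \<xi>\<bar>)"
proof -
  show 1: "\<bar>dpart \<gamma> \<Phi> \<xi>\<bar> \<le> (SUP \<xi>\<in>V. \<bar>dpart \<gamma> \<Phi> \<xi>\<bar>)" by (rule cSUP_upper[OF assms(2,1)])
  show "0 \<le> (SUP \<xi>\<in>V. \<bar>dpart \<gamma> \<Phi> \<xi>\<bar>)" using 1 by (meson abs_ge_zero order_trans)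
qed

lemma MM_term_nonneg:
  assumes "MM_finite \<Phi> V k" "\<xi> \<in> V" "\<gamma> \<in> {\<gamma>. 2 \<le> mlen \<gamma> \<and> mlen \<gamma> \<le> k}"
  shows "0 \<le> (SUP \<xi>\<in>V. \<bar>dpart \<gamma> \<Phi> \<xi>\<bar>)"
proof -
  have "bdd_above ((\<lambda>\<xi>. \<bar>dpart \<gamma> \<Phi> \<xi>\<bar>) ` V)" using assms(1,3) unfolding MM_finite_def by simp
  thus ?thesis using SUP_term_nonneg(2) assms(2) by blast
qed

lemma MM_nonneg:
  assumes "MM_finite \<Phi> V k" "\<xi> \<in> V"
  shows "0 \<le> MM \<Phi> V k"
  unfolding MM_def using MM_term_nonneg[OF assms]
  by (auto intro!: sum_nonneg)

lemma MM_mono: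
  assumes "k1 \<le> k2" "MM_finite \<Phi> V k2" "\<xi> \<in> V"
  shows "MM \<Phi> V k1 \<le> max 1 (MM \<Phi> V k2)"
proof (cases "k1 \<le> 1")
  case True thus ?thesis by (simp add: MM_def)
next
  case False
  hence "MM \<Phi> V k1 \<le> MM \<Phi> V k2"
    unfolding MM_def using assms False
    by (auto intro!: sum_mono2 finite_gamma MM_term_nonneg[OF assms(2,3)])
  thus ?thesis by simp
qed

lemma MM_bound:
  assumes "smooth_on UNIV \<Phi>" "2 \<le> length l" "length l \<le> k" "MM_finite \<Phi> V k" "\<xi> \<in> V"
  shows "\<bar>pderivs l \<Phi> \<xi>\<bar> \<le> MM \<Phi> V k"
proof -
  have eq: "pderivs l \<Phi> \<xi> = dpart (cnt l) \<Phi> \<xi>" by (rule pderivs_dpart[OF open_UNIV assms(1)]) simp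
  have mem: "cnt l \<in> {\<gamma>. 2 \<le> mlen \<gamma> \<and> mlen \<gamma> \<le> k}" using assms(2,3) by (simp add: mlen_cnt)
  have bdd: "\<And>\<gamma>. \<gamma> \<in> {\<gamma>. 2 \<le> mlen \<gamma> \<and> mlen \<gamma> \<le> k} \<Longrightarrow> bdd_above ((\<lambda>\<xi>. \<bar>dpart \<gamma> \<Phi> \<xi>\<bar>) ` V)"
    using assms(4) unfolding MM_finite_def by simp
  have "\<bar>pderivs l \<Phi> \<xi>\<bar> \<le> (SUP \<xi>\<in>V. \<bar>dpart (cnt l) \<Phi> \<xi>\<bar>)"
    unfolding eq by (rule SUP_term_nonneg(1)[OF bdd[OF mem] assms(5)])
  also have "\<dots> \<le> (\<Sum>\<gamma>\<in>{\<gamma>. 2 \<le> mlen \<gamma> \<and> mlen \<gamma> \<le> k}. (SUP \<xi>\<in>V. \<bar>dpart \<gamma> \<Phi> \<xi>\<bar>))"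
    by (rule member_le_sum[OF mem]) (rule SUP_term_nonneg(2)[OF bdd assms(5)], simp_all add: finite_gamma)
  also have "\<dots> = MM \<Phi> V k" using assms(2,3) by (simp add: MM_def)
  finally show ?thesis .
qed


definition SmG :: "((real^'n::finite \<Rightarrow> real) \<Rightarrow> real^'n \<Rightarrow> real) \<Rightarrow> bool" where
  "SmG f \<longleftrightarrow> (\<forall>\<Phi>. smooth_on UNIV \<Phi> \<longrightarrow> smooth_on (Gs \<Phi>) (f \<Phi>))"

definition Bnd :: "nat \<Rightarrow> int \<Rightarrow> int \<Rightarrow> 'n::finite list \<Rightarrow> ((real^'n \<Rightarrow> real) \<Rightarrow> real^'n \<Rightarrow> real) \<Rightarrow> bool" where
  "Bnd s a b l f \<longleftrightarrow> (\<exists>F. mono_on {0..} F \<and> (\<forall>t\<ge>0. 0 \<le> F t) \<and>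
     (\<forall>\<Phi> V \<xi>. smooth_on UNIV \<Phi> \<longrightarrow> MM_finite \<Phi> V (s + length l) \<longrightarrow> \<xi> \<in> V \<longrightarrow> \<xi> \<in> Gs \<Phi> \<longrightarrow>
        \<bar>pderivs l (f \<Phi>) \<xi>\<bar> \<le> F (MM \<Phi> V (s + length l)) * PP a (b + int (length l)) (norm (grad \<Phi> \<xi>))))"

definition Adm :: "nat \<Rightarrow> nat \<Rightarrow> int \<Rightarrow> int \<Rightarrow> ((real^'n::finite \<Rightarrow> real) \<Rightarrow> real^'n \<Rightarrow> real) \<Rightarrow> bool" where
  "Adm n s a b f \<longleftrightarrow> SmG f \<and> (\<forall>l::'n list. length l \<le> n \<longrightarrow> Bnd s a b l f)"

lemma BndI:
  fixes f :: "(real^'n::finite \<Rightarrow> real) \<Rightarrow> real^'n \<Rightarrow> real"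
  assumes "mono_on {0..} F" "\<And>t. t \<ge> 0 \<Longrightarrow> 0 \<le> F t"
    "\<And>(\<Phi>::real^'n \<Rightarrow> real) V \<xi>. smooth_on UNIV \<Phi> \<Longrightarrow> MM_finite \<Phi> V (s + length l) \<Longrightarrow> \<xi> \<in> V \<Longrightarrow> \<xi> \<in> Gs \<Phi> \<Longrightarrow>
        \<bar>pderivs l (f \<Phi>) \<xi>\<bar> \<le> F (MM \<Phi> V (s + length l)) * PP a (b + int (length l)) (norm (grad \<Phi> \<xi>))"
  shows "Bnd s a b l f"
  unfolding Bnd_def using assms by blast

lemma BndE:
  fixes f :: "(real^'n::finite \<Rightarrow> real) \<Rightarrow> real^'n \<Rightarrow> real"
  assumes "Bnd s a b l f"
  obtains F where "mono_on {0..} F" "\<And>t. t \<ge> 0 \<Longrightarrow> 0 \<le> F t"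
    "\<And>(\<Phi>::real^'n \<Rightarrow> real) V \<xi>. smooth_on UNIV \<Phi> \<Longrightarrow> MM_finite \<Phi> V (s + length l) \<Longrightarrow> \<xi> \<in> V \<Longrightarrow> \<xi> \<in> Gs \<Phi> \<Longrightarrow>
        \<bar>pderivs l (f \<Phi>) \<xi>\<bar> \<le> F (MM \<Phi> V (s + length l)) * PP a (b + int (length l)) (norm (grad \<Phi> \<xi>))"
  using assms unfolding Bnd_def by blast

lemma Gs_norm_pos: "\<xi> \<in> Gs \<Phi> \<Longrightarrow> norm (grad \<Phi> \<xi>) > 0"
  unfolding Gs_def by simp

lemma mono_on_max1: "mono_on {0..} F \<Longrightarrow> mono_on {0..} (\<lambda>t::real. F (max 1 t))"
  by (rule mono_onI) (auto intro!: mono_onD[of _ F])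

lemma Bnd_weaken:
  fixes f :: "(real^'n::finite \<Rightarrow> real) \<Rightarrow> real^'n \<Rightarrow> real"
  assumes "Bnd s a b l f" "s \<le> s'" "a' \<le> a" "b \<le> b'"
  shows "Bnd s' a' b' l f"
proof -
  obtain F where F: "mono_on {0..} F" "\<And>t. t \<ge> 0 \<Longrightarrow> 0 \<le> F t"
    "\<And>(\<Phi>::real^'n \<Rightarrow> real) V \<xi>. smooth_on UNIV \<Phi> \<Longrightarrow> MM_finite \<Phi> V (s + length l) \<Longrightarrow> \<xi> \<in> V \<Longrightarrow> \<xi> \<in> Gs \<Phi> \<Longrightarrow>
        \<bar>pderivs l (f \<Phi>) \<xi>\<bar> \<le> F (MM \<Phi> V (s + length l)) * PP a (b + int (length l)) (norm (grad \<Phi> \<xi>))"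
    using BndE[OF assms(1)] by blast
  show ?thesis
  proof (rule BndI[of "\<lambda>t. F (max 1 t)"])
    show "mono_on {0..} (\<lambda>t. F (max 1 t))" by (rule mono_on_max1[OF F(1)])
    show "\<And>t. 0 \<le> t \<Longrightarrow> 0 \<le> F (max 1 t)" using F(2) by simp
    fix \<Phi> :: "real^'n \<Rightarrow> real" and V \<xi>
    assume h: "smooth_on UNIV \<Phi>" "MM_finite \<Phi> V (s' + length l)" "\<xi> \<in> V" "\<xi> \<in> Gs \<Phi>"
    have fin: "MM_finite \<Phi> V (s + length l)" using MM_finite_mono[OF _ h(2)] assms(2) by simp
    have r: "norm (grad \<Phi> \<xi>) > 0" using Gs_norm_pos[OF h(4)] .
    have m0: "0 \<le> MM \<Phi> V (s + length l)" using MM_nonneg[OF fin h(3)] .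
    have m1: "MM \<Phi> V (s + length l) \<le> max 1 (MM \<Phi> V (s' + length l))"
      using MM_mono[OF _ h(2) h(3)] assms(2) by simp
    have "\<bar>pderivs l (f \<Phi>) \<xi>\<bar> \<le> F (MM \<Phi> V (s + length l)) * PP a (b + int (length l)) (norm (grad \<Phi> \<xi>))"
      by (rule F(3)[OF h(1) fin h(3,4)])
    also have "\<dots> \<le> F (max 1 (MM \<Phi> V (s' + length l))) * PP a' (b' + int (length l)) (norm (grad \<Phi> \<xi>))"
    proof (rule mult_mono)
      show "F (MM \<Phi> V (s + length l)) \<le> F (max 1 (MM \<Phi> V (s' + length l)))"
        by (rule mono_onD[OF F(1)]) (use m0 m1 in auto)
      show "PP a (b + int (length l)) (norm (grad \<Phi> \<xi>)) \<le> PP a' (b' + int (length l)) (norm (grad \<Phi> \<xi>))"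
        by (rule PP_mono[OF r]) (use assms in auto)
      show "0 \<le> F (max 1 (MM \<Phi> V (s' + length l)))" using F(2) by simp
      show "0 \<le> PP a (b + int (length l)) (norm (grad \<Phi> \<xi>))" using PP_nonneg[OF r] .
    qed
    finally show "\<bar>pderivs l (f \<Phi>) \<xi>\<bar> \<le> F (max 1 (MM \<Phi> V (s' + length l))) * PP a' (b' + int (length l)) (norm (grad \<Phi> \<xi>))" .
  qed
qed

lemma Adm_weaken:
  fixes f :: "(real^'n::finite \<Rightarrow> real) \<Rightarrow> real^'n \<Rightarrow> real"
  assumes "Adm n s a b f" "n' \<le> n" "s \<le> s'" "a' \<le> a" "b \<le> b'"
  shows "Adm n' s' a' b' f"
  using assms Bnd_weaken unfolding Adm_def by (meson order_trans)

lemma Adm_local: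
  fixes f :: "(real^'n::finite \<Rightarrow> real) \<Rightarrow> real^'n \<Rightarrow> real"
  assumes "Adm n s a b f" "\<And>\<Phi> x. smooth_on UNIV \<Phi> \<Longrightarrow> x \<in> Gs \<Phi> \<Longrightarrow> f \<Phi> x = g \<Phi> x"
  shows "Adm n s a b g"
  unfolding Adm_def
proof (intro conjI allI impI)
  show "SmG g" unfolding SmG_def
  proof (intro allI impI)
    fix \<Phi> :: "real^'n \<Rightarrow> real" assume "smooth_on UNIV \<Phi>"
    thus "smooth_on (Gs \<Phi>) (g \<Phi>)"
      using smooth_local[OF open_Gs, of \<Phi> "f \<Phi>" "g \<Phi>"] assms unfolding Adm_def SmG_def by blast
  qed
  fix l :: "'n list" assume len: "length l \<le> n"
  obtain F where F: "mono_on {0..} F" "\<And>t. t \<ge> 0 \<Longrightarrow> 0 \<le> F t"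
    "\<And>(\<Phi>::real^'n \<Rightarrow> real) V \<xi>. smooth_on UNIV \<Phi> \<Longrightarrow> MM_finite \<Phi> V (s + length l) \<Longrightarrow> \<xi> \<in> V \<Longrightarrow> \<xi> \<in> Gs \<Phi> \<Longrightarrow>
        \<bar>pderivs l (f \<Phi>) \<xi>\<bar> \<le> F (MM \<Phi> V (s + length l)) * PP a (b + int (length l)) (norm (grad \<Phi> \<xi>))"
    using BndE assms(1) len unfolding Adm_def by metis
  show "Bnd s a b l g"
  proof (rule BndI[OF F(1,2)])
    fix \<Phi> :: "real^'n \<Rightarrow> real" and V \<xi>
    assume h: "smooth_on UNIV \<Phi>" "MM_finite \<Phi> V (s + length l)" "\<xi> \<in> V" "\<xi> \<in> Gs \<Phi>"
    have "pderivs l (g \<Phi>) \<xi> = pderivs l (f \<Phi>) \<xi>"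
      by (rule pderivs_local[OF open_Gs[OF h(1)] _ h(4)]) (use assms(2) h(1) in auto)
    thus "\<bar>pderivs l (g \<Phi>) \<xi>\<bar> \<le> F (MM \<Phi> V (s + length l)) * PP a (b + int (length l)) (norm (grad \<Phi> \<xi>))"
      using F(3)[OF h] by simp
  qed
qed


lemma pderivs_add:
  assumes "open S" "smooth_on S f" "smooth_on S g" "x \<in> S"
  shows "pderivs l (\<lambda>y. f y + g y) x = pderivs l f x + pderivs l g x"
  using assms(4)
proof (induction l arbitrary: x)
  case Nil thus ?case by simp
next
  case (Cons i l)
  have "pderivs (i # l) (\<lambda>y. f y + g y) x = pd i (\<lambda>y. pderivs l f y + pderivs l g y) x"
    using pd_local[OF assms(1) Cons.prems, of "pderivs l (\<lambda>y. f y + g y)" "\<lambda>y. pderivs l f y + pderivs l g y" i]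
      Cons.IH by simp
  also have "\<dots> = pd i (pderivs l f) x + pd i (pderivs l g) x"
    using pd_add[OF smooth_ldiff[OF smooth_pderivs[OF assms(2)] Cons.prems] smooth_ldiff[OF smooth_pderivs[OF assms(3)] Cons.prems]]
    by simp
  finally show ?case by simp
qed

lemma pderivs_minus:
  assumes "open S" "smooth_on S f" "x \<in> S"
  shows "pderivs l (\<lambda>y. - f y) x = - pderivs l f x"
  using assms(3)
proof (induction l arbitrary: x)
  case Nil thus ?case by simp
next
  case (Cons i l)
  have "pderivs (i # l) (\<lambda>y. - f y) x = pd i (\<lambda>y. - pderivs l f y) x"
    using pd_local[OF assms(1) Cons.prems, of "pderivs l (\<lambda>y. - f y)" "\<lambda>y. - pderivs l f y" i]
      Cons.IH by simp
  also have "\<dots> = - pd i (pderivs l f) x"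
    using pd_minus[OF smooth_ldiff[OF smooth_pderivs[OF assms(2)] Cons.prems]] by simp
  finally show ?case by simp
qed

lemma SmG_Adm: "Adm n s a b f \<Longrightarrow> SmG f"
  unfolding Adm_def by simp

lemma SmG_D: "SmG f \<Longrightarrow> smooth_on UNIV \<Phi> \<Longrightarrow> smooth_on (Gs \<Phi>) (f \<Phi>)"
  unfolding SmG_def by blast

lemma Adm_Bnd: "Adm n s a b f \<Longrightarrow> length l \<le> n \<Longrightarrow> Bnd s a b l f"
  unfolding Adm_def by blast

lemma AdmI: "SmG f \<Longrightarrow> (\<And>l. length l \<le> n \<Longrightarrow> Bnd s a b l f) \<Longrightarrow> Adm n s a b f"
  unfolding Adm_def by blast

lemma Adm_zero: "Adm n s a b (\<lambda>\<Phi> x. 0)"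
proof (rule AdmI)
  show "SmG (\<lambda>\<Phi> x. 0 :: real)" unfolding SmG_def by (simp add: smooth_const)
  fix l :: "'n::finite list"
  show "Bnd s a b l (\<lambda>\<Phi> x. 0)"
    by (rule BndI[of "\<lambda>t. 0"]) (auto simp: pderivs_const mono_on_def PP_nonneg Gs_norm_pos)
qed

lemma Adm_one: "Adm n 1 0 0 (\<lambda>\<Phi> x. 1)"
proof (rule AdmI)
  show "SmG (\<lambda>\<Phi> x. 1 :: real)" unfolding SmG_def by (simp add: smooth_const)
  fix l :: "'n::finite list"
  show "Bnd 1 0 0 l (\<lambda>\<Phi> x. 1)"
  proof (rule BndI[of "\<lambda>t. 1"])
    fix \<Phi> :: "real^'n \<Rightarrow> real" and V \<xi>
    assume h: "smooth_on UNIV \<Phi>" "MM_finite \<Phi> V (1 + length l)" "\<xi> \<in> V" "\<xi> \<in> Gs \<Phi>"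
    have r: "norm (grad \<Phi> \<xi>) > 0" using Gs_norm_pos[OF h(4)] .
    show "\<bar>pderivs l (\<lambda>x. 1) \<xi>\<bar> \<le> 1 * PP 0 (0 + int (length l)) (norm (grad \<Phi> \<xi>))"
    proof (cases "l = []")
      case True thus ?thesis by (simp add: PP_def)
    next
      case False thus ?thesis using PP_nonneg[OF r] by (simp add: pderivs_const)
    qed
  qed (auto simp: mono_on_def)
qed

lemma Adm_add:
  fixes f g :: "(real^'n::finite \<Rightarrow> real) \<Rightarrow> real^'n \<Rightarrow> real"
  assumes "Adm n s a b f" "Adm n s a b g"
  shows "Adm n s a b (\<lambda>\<Phi> x. f \<Phi> x + g \<Phi> x)"
proof (rule AdmI)
  show "SmG (\<lambda>\<Phi> x. f \<Phi> x + g \<Phi> x)" unfolding SmG_def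
    using SmG_D[OF SmG_Adm[OF assms(1)]] SmG_D[OF SmG_Adm[OF assms(2)]] smooth_add open_Gs by blast
  fix l :: "'n list" assume len: "length l \<le> n"
  obtain F where F: "mono_on {0..} F" "\<And>t. t \<ge> 0 \<Longrightarrow> 0 \<le> F t"
    "\<And>(\<Phi>::real^'n \<Rightarrow> real) V \<xi>. smooth_on UNIV \<Phi> \<Longrightarrow> MM_finite \<Phi> V (s + length l) \<Longrightarrow> \<xi> \<in> V \<Longrightarrow> \<xi> \<in> Gs \<Phi> \<Longrightarrow>
        \<bar>pderivs l (f \<Phi>) \<xi>\<bar> \<le> F (MM \<Phi> V (s + length l)) * PP a (b + int (length l)) (norm (grad \<Phi> \<xi>))"
    using BndE[OF Adm_Bnd[OF assms(1) len]] by metis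
  obtain G where G: "mono_on {0..} G" "\<And>t. t \<ge> 0 \<Longrightarrow> 0 \<le> G t"
    "\<And>(\<Phi>::real^'n \<Rightarrow> real) V \<xi>. smooth_on UNIV \<Phi> \<Longrightarrow> MM_finite \<Phi> V (s + length l) \<Longrightarrow> \<xi> \<in> V \<Longrightarrow> \<xi> \<in> Gs \<Phi> \<Longrightarrow>
        \<bar>pderivs l (g \<Phi>) \<xi>\<bar> \<le> G (MM \<Phi> V (s + length l)) * PP a (b + int (length l)) (norm (grad \<Phi> \<xi>))"
    using BndE[OF Adm_Bnd[OF assms(2) len]] by metis
  show "Bnd s a b l (\<lambda>\<Phi> x. f \<Phi> x + g \<Phi> x)"
  proof (rule BndI[of "\<lambda>t. F t + G t"])
    show "mono_on {0..} (\<lambda>t. F t + G t)" using F(1) G(1) unfolding mono_on_def by (meson add_mono)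
    show "\<And>t. 0 \<le> t \<Longrightarrow> 0 \<le> F t + G t" using F(2) G(2) by (simp add: add_nonneg_nonneg)
    fix \<Phi> :: "real^'n \<Rightarrow> real" and V \<xi>
    assume h: "smooth_on UNIV \<Phi>" "MM_finite \<Phi> V (s + length l)" "\<xi> \<in> V" "\<xi> \<in> Gs \<Phi>"
    have eq: "pderivs l (\<lambda>x. f \<Phi> x + g \<Phi> x) \<xi> = pderivs l (f \<Phi>) \<xi> + pderivs l (g \<Phi>) \<xi>"
      by (rule pderivs_add[OF open_Gs[OF h(1)] SmG_D[OF SmG_Adm[OF assms(1)] h(1)] SmG_D[OF SmG_Adm[OF assms(2)] h(1)] h(4)])
    show "\<bar>pderivs l (\<lambda>x. f \<Phi> x + g \<Phi> x) \<xi>\<bar> \<le> (F (MM \<Phi> V (s + length l)) + G (MM \<Phi> V (s + length l))) * PP a (b + int (length l)) (norm (grad \<Phi> \<xi>))"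
      unfolding eq distrib_right using F(3)[OF h] G(3)[OF h] by linarith
  qed
qed

lemma Adm_minus:
  fixes f :: "(real^'n::finite \<Rightarrow> real) \<Rightarrow> real^'n \<Rightarrow> real"
  assumes "Adm n s a b f"
  shows "Adm n s a b (\<lambda>\<Phi> x. - f \<Phi> x)"
proof (rule AdmI)
  show "SmG (\<lambda>\<Phi> x. - f \<Phi> x)" unfolding SmG_def
    using SmG_D[OF SmG_Adm[OF assms(1)]] smooth_minus open_Gs by blast
  fix l :: "'n list" assume len: "length l \<le> n"
  obtain F where F: "mono_on {0..} F" "\<And>t. t \<ge> 0 \<Longrightarrow> 0 \<le> F t"
    "\<And>(\<Phi>::real^'n \<Rightarrow> real) V \<xi>. smooth_on UNIV \<Phi> \<Longrightarrow> MM_finite \<Phi> V (s + length l) \<Longrightarrow> \<xi> \<in> V \<Longrightarrow> \<xi> \<in> Gs \<Phi> \<Longrightarrow>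
        \<bar>pderivs l (f \<Phi>) \<xi>\<bar> \<le> F (MM \<Phi> V (s + length l)) * PP a (b + int (length l)) (norm (grad \<Phi> \<xi>))"
    using BndE[OF Adm_Bnd[OF assms(1) len]] by metis
  show "Bnd s a b l (\<lambda>\<Phi> x. - f \<Phi> x)"
  proof (rule BndI[OF F(1,2)])
    fix \<Phi> :: "real^'n \<Rightarrow> real" and V \<xi>
    assume h: "smooth_on UNIV \<Phi>" "MM_finite \<Phi> V (s + length l)" "\<xi> \<in> V" "\<xi> \<in> Gs \<Phi>"
    have eq: "pderivs l (\<lambda>x. - f \<Phi> x) \<xi> = - pderivs l (f \<Phi>) \<xi>"
      by (rule pderivs_minus[OF open_Gs[OF h(1)] SmG_D[OF SmG_Adm[OF assms(1)] h(1)] h(4)])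
    show "\<bar>pderivs l (\<lambda>x. - f \<Phi> x) \<xi>\<bar> \<le> F (MM \<Phi> V (s + length l)) * PP a (b + int (length l)) (norm (grad \<Phi> \<xi>))"
      unfolding eq using F(3)[OF h] by simp
  qed
qed

lemma Adm_sum:
  fixes f :: "'i \<Rightarrow> (real^'n::finite \<Rightarrow> real) \<Rightarrow> real^'n \<Rightarrow> real"
  assumes "finite A" "\<And>k. k \<in> A \<Longrightarrow> Adm n s a b (f k)"
  shows "Adm n s a b (\<lambda>\<Phi> x. \<Sum>k\<in>A. f k \<Phi> x)"
  using assms
proof (induction A rule: finite_induct)
  case empty thus ?case using Adm_zero by simp
next
  case (insert k A)
  have "Adm n s a b (\<lambda>\<Phi> x. f k \<Phi> x + (\<Sum>k\<in>A. f k \<Phi> x))"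
    by (rule Adm_add) (use insert in auto)
  thus ?case using insert by simp
qed


lemma pderivs_snoc: "pderivs (l @ [i]) f = pderivs l (pd i f)"
  by (simp add: pderivs_append)

lemma Bnd_pd:
  fixes f :: "(real^'n::finite \<Rightarrow> real) \<Rightarrow> real^'n \<Rightarrow> real"
  shows "Bnd s a b (l @ [i]) f \<longleftrightarrow> Bnd (s + 1) a (b + 1) l (\<lambda>\<Phi>. pd i (f \<Phi>))"
proof -
  have e1: "s + length (l @ [i]) = s + 1 + length l" by simp
  have e2: "b + int (length (l @ [i])) = b + 1 + int (length l)" by simp
  show ?thesis unfolding Bnd_def e1 e2 pderivs_snoc ..
qed

lemma Adm_pd:
  fixes f :: "(real^'n::finite \<Rightarrow> real) \<Rightarrow> real^'n \<Rightarrow> real"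
  assumes "Adm (Suc n) s a b f"
  shows "Adm n (s + 1) a (b + 1) (\<lambda>\<Phi>. pd i (f \<Phi>))"
proof (rule AdmI)
  show "SmG (\<lambda>\<Phi>. pd i (f \<Phi>))" unfolding SmG_def
    using SmG_D[OF SmG_Adm[OF assms]] smooth_pd by blast
  fix l :: "'n list" assume "length l \<le> n"
  hence "Bnd s a b (l @ [i]) f" using Adm_Bnd[OF assms] by simp
  thus "Bnd (s + 1) a (b + 1) l (\<lambda>\<Phi>. pd i (f \<Phi>))" using Bnd_pd by blast
qed

lemma Adm_lift:
  fixes f :: "(real^'n::finite \<Rightarrow> real) \<Rightarrow> real^'n \<Rightarrow> real"
  assumes "SmG f" "Bnd s a b [] f" "\<And>i. Adm n (s + 1) a (b + 1) (\<lambda>\<Phi>. pd i (f \<Phi>))"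
  shows "Adm (Suc n) s a b f"
proof (rule AdmI[OF assms(1)])
  fix l :: "'n list" assume len: "length l \<le> Suc n"
  show "Bnd s a b l f"
  proof (cases l rule: rev_exhaust)
    case Nil thus ?thesis using assms(2) by simp
  next
    case (snoc l' i)
    hence "length l' \<le> n" using len by simp
    hence "Bnd (s + 1) a (b + 1) l' (\<lambda>\<Phi>. pd i (f \<Phi>))" using Adm_Bnd[OF assms(3)] by blast
    thus ?thesis using Bnd_pd snoc by blast
  qed
qed

lemma Adm0: "Adm 0 s a b f \<longleftrightarrow> SmG f \<and> Bnd s a b [] f"
  unfolding Adm_def by auto

lemma Bnd0_mult:
  fixes f g :: "(real^'n::finite \<Rightarrow> real) \<Rightarrow> real^'n \<Rightarrow> real"
  assumes "Bnd s1 a1 b1 [] f" "Bnd s2 a2 b2 [] g"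
  shows "Bnd (max s1 s2) (a1 + a2) (b1 + b2) [] (\<lambda>\<Phi> x. f \<Phi> x * g \<Phi> x)"
proof -
  obtain F where F: "mono_on {0..} F" "\<And>t. t \<ge> 0 \<Longrightarrow> 0 \<le> F t"
    "\<And>(\<Phi>::real^'n \<Rightarrow> real) V \<xi>. smooth_on UNIV \<Phi> \<Longrightarrow> MM_finite \<Phi> V (s1 + length ([]::'n list)) \<Longrightarrow> \<xi> \<in> V \<Longrightarrow> \<xi> \<in> Gs \<Phi> \<Longrightarrow>
        \<bar>pderivs [] (f \<Phi>) \<xi>\<bar> \<le> F (MM \<Phi> V (s1 + length ([]::'n list))) * PP a1 (b1 + int (length ([]::'n list))) (norm (grad \<Phi> \<xi>))"
    using BndE[OF assms(1)] by metis
  obtain G where G: "mono_on {0..} G" "\<And>t. t \<ge> 0 \<Longrightarrow> 0 \<le> G t"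
    "\<And>(\<Phi>::real^'n \<Rightarrow> real) V \<xi>. smooth_on UNIV \<Phi> \<Longrightarrow> MM_finite \<Phi> V (s2 + length ([]::'n list)) \<Longrightarrow> \<xi> \<in> V \<Longrightarrow> \<xi> \<in> Gs \<Phi> \<Longrightarrow>
        \<bar>pderivs [] (g \<Phi>) \<xi>\<bar> \<le> G (MM \<Phi> V (s2 + length ([]::'n list))) * PP a2 (b2 + int (length ([]::'n list))) (norm (grad \<Phi> \<xi>))"
    using BndE[OF assms(2)] by metis
  define C where "C = real (card {a2..b2})"
  have C: "C \<ge> 0" unfolding C_def by simp
  show ?thesis
  proof (rule BndI[of "\<lambda>t. C * (F (max 1 t) * G (max 1 t))"])
    show "mono_on {0..} (\<lambda>t. C * (F (max 1 t) * G (max 1 t)))"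
    proof (rule mono_onI)
      fix r t :: real assume "r \<in> {0..}" "t \<in> {0..}" "r \<le> t"
      hence "F (max 1 r) \<le> F (max 1 t)" "G (max 1 r) \<le> G (max 1 t)"
        using mono_onD[OF mono_on_max1[OF F(1)]] mono_onD[OF mono_on_max1[OF G(1)]] by auto
      moreover have "0 \<le> F (max 1 r)" "0 \<le> G (max 1 r)" using F(2) G(2) by auto
      ultimately show "C * (F (max 1 r) * G (max 1 r)) \<le> C * (F (max 1 t) * G (max 1 t))"
        using C by (intro mult_left_mono mult_mono) auto
    qed
    show "\<And>t. 0 \<le> t \<Longrightarrow> 0 \<le> C * (F (max 1 t) * G (max 1 t))" using F(2) G(2) C by simp
    fix \<Phi> :: "real^'n \<Rightarrow> real" and V \<xi>
    assume h: "smooth_on UNIV \<Phi>" "MM_finite \<Phi> V (max s1 s2 + length ([]::'n list))" "\<xi> \<in> V" "\<xi> \<in> Gs \<Phi>"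
    define r where "r = norm (grad \<Phi> \<xi>)"
    have r: "r > 0" using Gs_norm_pos[OF h(4)] unfolding r_def .
    define M where "M = MM \<Phi> V (max s1 s2)"
    have f1: "MM_finite \<Phi> V s1" "MM_finite \<Phi> V s2" using MM_finite_mono[OF _ h(2)] by auto
    have m1: "0 \<le> MM \<Phi> V s1" "MM \<Phi> V s1 \<le> max 1 M"
      using MM_nonneg[OF f1(1) h(3)] MM_mono[OF _ h(2) h(3)] unfolding M_def by auto
    have m2: "0 \<le> MM \<Phi> V s2" "MM \<Phi> V s2 \<le> max 1 M"
      using MM_nonneg[OF f1(2) h(3)] MM_mono[OF _ h(2) h(3)] unfolding M_def by auto
    have bf: "\<bar>f \<Phi> \<xi>\<bar> \<le> F (max 1 M) * PP a1 b1 r"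
    proof -
      have "\<bar>f \<Phi> \<xi>\<bar> \<le> F (MM \<Phi> V s1) * PP a1 b1 r" using F(3)[OF h(1) _ h(3,4)] f1 unfolding r_def by simp
      also have "\<dots> \<le> F (max 1 M) * PP a1 b1 r"
        by (rule mult_right_mono[OF mono_onD[OF F(1)] PP_nonneg[OF r]]) (use m1 in auto)
      finally show ?thesis .
    qed
    have bg: "\<bar>g \<Phi> \<xi>\<bar> \<le> G (max 1 M) * PP a2 b2 r"
    proof -
      have "\<bar>g \<Phi> \<xi>\<bar> \<le> G (MM \<Phi> V s2) * PP a2 b2 r" using G(3)[OF h(1) _ h(3,4)] f1 unfolding r_def by simp
      also have "\<dots> \<le> G (max 1 M) * PP a2 b2 r"
        by (rule mult_right_mono[OF mono_onD[OF G(1)] PP_nonneg[OF r]]) (use m2 in auto)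
      finally show ?thesis .
    qed
    have "\<bar>f \<Phi> \<xi> * g \<Phi> \<xi>\<bar> = \<bar>f \<Phi> \<xi>\<bar> * \<bar>g \<Phi> \<xi>\<bar>" by (simp add: abs_mult)
    also have "\<dots> \<le> (F (max 1 M) * PP a1 b1 r) * (G (max 1 M) * PP a2 b2 r)"
      by (rule mult_mono[OF bf bg]) (use F(2) PP_nonneg[OF r] in auto)
    also have "\<dots> = (F (max 1 M) * G (max 1 M)) * (PP a1 b1 r * PP a2 b2 r)" by (simp add: ac_simps)
    also have "\<dots> \<le> (F (max 1 M) * G (max 1 M)) * (C * PP (a1 + a2) (b1 + b2) r)"
      by (rule mult_left_mono[OF PP_mult[OF r, of a1 b1 a2 b2, folded C_def]]) (use F(2) G(2) in auto)
    finally show "\<bar>pderivs [] (\<lambda>x. f \<Phi> x * g \<Phi> x) \<xi>\<bar> \<le> C * (F (max 1 (MM \<Phi> V (max s1 s2 + length ([]::'n list)))) * G (max 1 (MM \<Phi> V (max s1 s2 + length ([]::'n list))))) * PP (a1 + a2) (b1 + b2 + int (length ([]::'n list))) (norm (grad \<Phi> \<xi>))"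
      unfolding M_def r_def by (simp add: ac_simps)
  qed
qed

lemma Adm_mult:
  fixes f g :: "(real^'n::finite \<Rightarrow> real) \<Rightarrow> real^'n \<Rightarrow> real"
  assumes "Adm n s1 a1 b1 f" "Adm n s2 a2 b2 g"
  shows "Adm n (max s1 s2) (a1 + a2) (b1 + b2) (\<lambda>\<Phi> x. f \<Phi> x * g \<Phi> x)"
  using assms
proof (induction n arbitrary: s1 a1 b1 f s2 a2 b2 g)
  case 0
  have "SmG (\<lambda>\<Phi> x. f \<Phi> x * g \<Phi> x)" unfolding SmG_def
    using SmG_D[OF SmG_Adm[OF "0.prems"(1)]] SmG_D[OF SmG_Adm[OF "0.prems"(2)]] smooth_mult open_Gs by blast
  thus ?case using Bnd0_mult "0.prems" unfolding Adm0 by blast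
next
  case (Suc n)
  have sm: "SmG (\<lambda>\<Phi> x. f \<Phi> x * g \<Phi> x)" unfolding SmG_def
    using SmG_D[OF SmG_Adm[OF Suc.prems(1)]] SmG_D[OF SmG_Adm[OF Suc.prems(2)]] smooth_mult open_Gs by blast
  have b0: "Bnd (max s1 s2) (a1 + a2) (b1 + b2) [] (\<lambda>\<Phi> x. f \<Phi> x * g \<Phi> x)"
    by (rule Bnd0_mult[OF Adm_Bnd[OF Suc.prems(1)] Adm_Bnd[OF Suc.prems(2)]]) simp_all
  show ?case
  proof (rule Adm_lift[OF sm b0])
    fix i
    have fn: "Adm n s1 a1 b1 f" "Adm n s2 a2 b2 g" using Suc.prems Adm_weaken by (meson le_SucI order_refl)+
    have p1: "Adm n (max (s1 + 1) s2) (a1 + a2) (b1 + 1 + b2) (\<lambda>\<Phi> x. pd i (f \<Phi>) x * g \<Phi> x)"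
      by (rule Suc.IH[OF Adm_pd[OF Suc.prems(1)] fn(2)])
    have p2: "Adm n (max s1 (s2 + 1)) (a1 + a2) (b1 + (b2 + 1)) (\<lambda>\<Phi> x. f \<Phi> x * pd i (g \<Phi>) x)"
      by (rule Suc.IH[OF fn(1) Adm_pd[OF Suc.prems(2)]])
    have p1': "Adm n (max s1 s2 + 1) (a1 + a2) (b1 + b2 + 1) (\<lambda>\<Phi> x. pd i (f \<Phi>) x * g \<Phi> x)"
      by (rule Adm_weaken[OF p1]) auto
    have p2': "Adm n (max s1 s2 + 1) (a1 + a2) (b1 + b2 + 1) (\<lambda>\<Phi> x. f \<Phi> x * pd i (g \<Phi>) x)"
      by (rule Adm_weaken[OF p2]) auto
    have s: "Adm n (max s1 s2 + 1) (a1 + a2) (b1 + b2 + 1)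
       (\<lambda>\<Phi> x. pd i (f \<Phi>) x * g \<Phi> x + f \<Phi> x * pd i (g \<Phi>) x)"
      by (rule Adm_add[OF p1' p2'])
    show "Adm n (max s1 s2 + 1) (a1 + a2) (b1 + b2 + 1) (\<lambda>\<Phi>. pd i (\<lambda>x. f \<Phi> x * g \<Phi> x))"
    proof (rule Adm_local[OF s])
      fix \<Phi> :: "real^'n \<Rightarrow> real" and x
      assume h: "smooth_on UNIV \<Phi>" "x \<in> Gs \<Phi>"
      have "ldiff (f \<Phi>) x i" "ldiff (g \<Phi>) x i"
        using smooth_ldiff[OF SmG_D[OF SmG_Adm[OF Suc.prems(1)] h(1)] h(2)]
          smooth_ldiff[OF SmG_D[OF SmG_Adm[OF Suc.prems(2)] h(1)] h(2)] by auto
      thus "pd i (f \<Phi>) x * g \<Phi> x + f \<Phi> x * pd i (g \<Phi>) x = pd i (\<lambda>x. f \<Phi> x * g \<Phi> x) x"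
        using pd_mult by metis
    qed
  qed
qed


lemma PP_m1: "r > 0 \<Longrightarrow> PP (-1) (-1) r = r"
  unfolding PP_def by (simp add: power_int_minus)

lemma PP_one: "r > 0 \<Longrightarrow> a \<le> 0 \<Longrightarrow> 0 \<le> b \<Longrightarrow> 1 \<le> PP a b r"
  using PP_term[of r a 0 b] by simp

lemma SmG_pderivs: "SmG (\<lambda>\<Phi>. pderivs l \<Phi>)"
  unfolding SmG_def using smooth_pderivs smooth_subset by blast

lemma Adm_D: "Adm n 1 (-1) (-1) (\<lambda>\<Phi>. pd j (\<Phi>::real^'n::finite \<Rightarrow> real))"
proof (rule AdmI)
  show "SmG (\<lambda>\<Phi>. pd j (\<Phi>::real^'n::finite \<Rightarrow> real))"
    using SmG_pderivs[of "[j]"] by simp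
  fix l :: "'n list"
  show "Bnd 1 (-1) (-1) l (\<lambda>\<Phi>. pd j \<Phi>)"
  proof (rule BndI[of "\<lambda>t. max 1 t"])
    show "mono_on {0..} (\<lambda>t::real. max 1 t)" by (rule mono_onI) auto
    show "\<And>t::real. 0 \<le> t \<Longrightarrow> 0 \<le> max 1 t" by simp
    fix \<Phi> :: "real^'n \<Rightarrow> real" and V \<xi>
    assume h: "smooth_on UNIV \<Phi>" "MM_finite \<Phi> V (1 + length l)" "\<xi> \<in> V" "\<xi> \<in> Gs \<Phi>"
    define r where "r = norm (grad \<Phi> \<xi>)"
    have r: "r > 0" using Gs_norm_pos[OF h(4)] unfolding r_def .
    define M where "M = MM \<Phi> V (1 + length l)"
    show "\<bar>pderivs l (pd j \<Phi>) \<xi>\<bar> \<le> max 1 (MM \<Phi> V (1 + length l)) * PP (-1) (-1 + int (length l)) (norm (grad \<Phi> \<xi>))"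
    proof (cases "l = []")
      case True
      have "\<bar>pd j \<Phi> \<xi>\<bar> \<le> r" unfolding r_def by (rule pd_le_norm_grad)
      also have "\<dots> \<le> max 1 M * r" using r by (simp add: mult_le_cancel_right1)
      finally have "\<bar>pd j \<Phi> \<xi>\<bar> \<le> max 1 M * r" .
      thus ?thesis using True PP_m1[OF r] unfolding M_def r_def by simp
    next
      case False
      have "pderivs l (pd j \<Phi>) \<xi> = pderivs (l @ [j]) \<Phi> \<xi>" by (simp add: pderivs_append)
      also have "\<bar>\<dots>\<bar> \<le> M" unfolding M_def
        by (rule MM_bound[OF h(1) _ _ h(2,3)]) (use False in \<open>auto simp: Suc_le_eq\<close>)
      also have "\<dots> \<le> max 1 M * 1" by simp
      also have "\<dots> \<le> max 1 M * PP (-1) (-1 + int (length l)) r"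
        by (rule mult_left_mono[OF PP_one[OF r]]) (use False in auto)
      finally show ?thesis unfolding M_def r_def .
    qed
  qed
qed

lemma Adm_H: "Adm n 2 0 0 (\<lambda>\<Phi>. pd i (pd j (\<Phi>::real^'n::finite \<Rightarrow> real)))"
proof (rule AdmI)
  show "SmG (\<lambda>\<Phi>. pd i (pd j (\<Phi>::real^'n::finite \<Rightarrow> real)))"
    using SmG_pderivs[of "[i,j]"] by simp
  fix l :: "'n list"
  show "Bnd 2 0 0 l (\<lambda>\<Phi>. pd i (pd j \<Phi>))"
  proof (rule BndI[of "\<lambda>t. max 1 t"])
    show "mono_on {0..} (\<lambda>t::real. max 1 t)" by (rule mono_onI) auto
    show "\<And>t::real. 0 \<le> t \<Longrightarrow> 0 \<le> max 1 t" by simp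
    fix \<Phi> :: "real^'n \<Rightarrow> real" and V \<xi>
    assume h: "smooth_on UNIV \<Phi>" "MM_finite \<Phi> V (2 + length l)" "\<xi> \<in> V" "\<xi> \<in> Gs \<Phi>"
    define r where "r = norm (grad \<Phi> \<xi>)"
    have r: "r > 0" using Gs_norm_pos[OF h(4)] unfolding r_def .
    define M where "M = MM \<Phi> V (2 + length l)"
    have "pderivs l (pd i (pd j \<Phi>)) \<xi> = pderivs (l @ [i, j]) \<Phi> \<xi>" by (simp add: pderivs_append)
    also have "\<bar>\<dots>\<bar> \<le> M" unfolding M_def
      by (rule MM_bound[OF h(1) _ _ h(2,3)]) auto
    also have "\<dots> \<le> max 1 M * 1" by simp
    also have "\<dots> \<le> max 1 M * PP 0 (0 + int (length l)) r"
      by (rule mult_left_mono[OF PP_one[OF r]]) auto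
    finally show "\<bar>pderivs l (pd i (pd j \<Phi>)) \<xi>\<bar> \<le> max 1 (MM \<Phi> V (2 + length l)) * PP 0 (0 + int (length l)) (norm (grad \<Phi> \<xi>))"
      unfolding M_def r_def .
  qed
qed

definition WW :: "(real^'n::finite \<Rightarrow> real) \<Rightarrow> real^'n \<Rightarrow> real" where
  "WW \<Phi> x = inverse (qq \<Phi> x)"

lemma qq_fun: "qq \<Phi> = (\<lambda>x. \<Sum>j\<in>UNIV. pd j \<Phi> x * pd j \<Phi> x)"
  by (rule ext) (simp add: qq_def)

lemma WW_pd:
  assumes "smooth_on UNIV \<Phi>" "x \<in> Gs \<Phi>"
  shows "pd i (WW \<Phi>) x = - ((\<Sum>j\<in>UNIV. pd i (pd j \<Phi>) x * pd j \<Phi> x + pd j \<Phi> x * pd i (pd j \<Phi>) x)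
      * (WW \<Phi> x * WW \<Phi> x))"
proof -
  have q0: "qq \<Phi> x \<noteq> 0" using assms(2) Gs_qq by blast
  have lq: "ldiff (qq \<Phi>) x i" using smooth_ldiff[OF smooth_qq[OF assms(1)]] by simp
  have "pd i (WW \<Phi>) x = pd i (\<lambda>x. inverse (qq \<Phi> x)) x" unfolding WW_def[abs_def] ..
  also have "\<dots> = - (pd i (qq \<Phi>) x * (inverse (qq \<Phi> x) * inverse (qq \<Phi> x)))"
    using pd_inverse[OF lq q0] by simp
  also have "pd i (qq \<Phi>) x = (\<Sum>j\<in>UNIV. pd i (\<lambda>y. pd j \<Phi> y * pd j \<Phi> y) x)"
    unfolding qq_fun by (rule pd_sum[THEN conjunct1]) (auto intro: pd_mult[THEN conjunct2] smooth_ldiff smooth_pd assms(1))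
  also have "\<dots> = (\<Sum>j\<in>UNIV. pd i (pd j \<Phi>) x * pd j \<Phi> x + pd j \<Phi> x * pd i (pd j \<Phi>) x)"
  proof (rule sum.cong[OF refl])
    fix j
    have "ldiff (pd j \<Phi>) x i" using smooth_ldiff[OF smooth_pd[OF assms(1)]] by simp
    thus "pd i (\<lambda>y. pd j \<Phi> y * pd j \<Phi> y) x = pd i (pd j \<Phi>) x * pd j \<Phi> x + pd j \<Phi> x * pd i (pd j \<Phi>) x"
      using pd_mult by blast
  qed
  finally show ?thesis unfolding WW_def .
qed

lemma SmG_WW: "SmG WW"
  unfolding SmG_def WW_def[abs_def]
proof (intro allI impI)
  fix \<Phi> :: "real^'a \<Rightarrow> real" assume h: "smooth_on UNIV \<Phi>"
  show "smooth_on (Gs \<Phi>) (\<lambda>x. inverse (qq \<Phi> x))"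
    by (rule smooth_inverse[OF open_Gs[OF h] smooth_subset[OF smooth_qq[OF h]]]) (auto simp: Gs_qq)
qed

lemma Bnd_WW0: "Bnd 1 2 2 [] WW"
proof (rule BndI[of "\<lambda>t. 1"])
  fix \<Phi> :: "real^'n::finite \<Rightarrow> real" and V \<xi>
  assume h: "smooth_on UNIV \<Phi>" "MM_finite \<Phi> V (1 + length ([]::'n list))" "\<xi> \<in> V" "\<xi> \<in> Gs \<Phi>"
  define r where "r = norm (grad \<Phi> \<xi>)"
  have r: "r > 0" using Gs_norm_pos[OF h(4)] unfolding r_def .
  have q: "qq \<Phi> \<xi> = r^2" unfolding r_def by (simp add: norm_grad_sq)
  have "PP 2 2 r = (1/r)^2" unfolding PP_def by simp
  thus "\<bar>pderivs [] (WW \<Phi>) \<xi>\<bar> \<le> 1 * PP 2 (2 + int (length ([]::'n list))) (norm (grad \<Phi> \<xi>))"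
    unfolding r_def[symmetric] using q by (simp add: WW_def power_one_over inverse_eq_divide)
qed (auto simp: mono_on_def)

lemma Adm_WW: "Adm n 1 2 2 (WW :: (real^'n::finite \<Rightarrow> real) \<Rightarrow> _)"
proof (induction n)
  case 0 thus ?case unfolding Adm0 using SmG_WW Bnd_WW0 by blast
next
  case (Suc n)
  show ?case
  proof (rule Adm_lift[OF SmG_WW Bnd_WW0])
    fix i :: 'n
    have t1: "Adm n 2 (-1) (-1) (\<lambda>\<Phi> x. pd i (pd j \<Phi>) x * pd j \<Phi> x + pd j \<Phi> x * pd i (pd j \<Phi>) x)" for j
    proof -
      have a: "Adm n 2 (-1) (-1) (\<lambda>\<Phi> x. pd i (pd j \<Phi>) x * pd j (\<Phi>::real^'n \<Rightarrow> real) x)"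
        by (rule Adm_weaken[OF Adm_mult[OF Adm_H Adm_D]]) auto
      have b: "Adm n 2 (-1) (-1) (\<lambda>\<Phi> x. pd j \<Phi> x * pd i (pd j (\<Phi>::real^'n \<Rightarrow> real)) x)"
        by (rule Adm_weaken[OF Adm_mult[OF Adm_D Adm_H]]) auto
      show ?thesis by (rule Adm_add[OF a b])
    qed
    have t2: "Adm n 2 (-1) (-1) (\<lambda>\<Phi> x. \<Sum>j\<in>UNIV. pd i (pd j \<Phi>) x * pd j \<Phi> x + pd j \<Phi> x * pd i (pd j (\<Phi>::real^'n \<Rightarrow> real)) x)"
      by (rule Adm_sum, simp, rule t1)
    have t3: "Adm n 1 4 4 (\<lambda>\<Phi> x. WW \<Phi> x * WW (\<Phi>::real^'n \<Rightarrow> real) x)"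
      by (rule Adm_weaken[OF Adm_mult[OF Suc.IH Suc.IH]]) auto
    have t4: "Adm n (1 + 1) 2 (2 + 1) (\<lambda>\<Phi> x. - ((\<Sum>j\<in>UNIV. pd i (pd j \<Phi>) x * pd j \<Phi> x + pd j \<Phi> x * pd i (pd j \<Phi>) x)
      * (WW \<Phi> x * WW (\<Phi>::real^'n \<Rightarrow> real) x)))"
      by (rule Adm_minus, rule Adm_weaken[OF Adm_mult[OF t2 t3]]) auto
    show "Adm n (1 + 1) 2 (2 + 1) (\<lambda>\<Phi>. pd i (WW \<Phi>))"
      by (rule Adm_local[OF t4]) (simp add: WW_pd)
  qed
qed

lemma Acoef_eq: "Acoef \<Phi> i x = pd i \<Phi> x * WW \<Phi> x"
  unfolding Acoef_def WW_def by (simp add: norm_grad_sq divide_inverse)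

lemma Adm_A: "Adm n 1 1 1 (\<lambda>\<Phi> x. Acoef (\<Phi>::real^'n::finite \<Rightarrow> real) i x)"
proof -
  have "Adm n 1 1 1 (\<lambda>\<Phi> x. pd i (\<Phi>::real^'n \<Rightarrow> real) x * WW \<Phi> x)"
    by (rule Adm_weaken[OF Adm_mult[OF Adm_D Adm_WW]]) auto
  thus ?thesis by (simp add: Acoef_eq)
qed


fun E :: "nat \<Rightarrow> 'n::finite list \<Rightarrow> (real^'n \<Rightarrow> real) \<Rightarrow> real^'n \<Rightarrow> real" where
  "E 0 l \<Phi> x = (if l = [] then 1 else 0)"
| "E (Suc N) l \<Phi> x = - (\<Sum>i\<in>UNIV. pd i (\<lambda>y. Acoef \<Phi> i y * E N l \<Phi> y) x)
     - (case l of [] \<Rightarrow> 0 | j # l' \<Rightarrow> Acoef \<Phi> j x * E N l' \<Phi> x)"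

lemma E_zero: "length l > N \<Longrightarrow> E N l \<Phi> x = 0"
proof (induction N arbitrary: l x)
  case 0 thus ?case by simp
next
  case (Suc N)
  have z: "E N l \<Phi> y = 0" for y using Suc by simp
  have z2: "(case l of [] \<Rightarrow> 0 | j # l' \<Rightarrow> Acoef \<Phi> j x * E N l' \<Phi> x) = 0"
    using Suc by (cases l) auto
  show ?case using z z2 by (simp add: pd_const)
qed

lemma Adm_E:
  "length l \<le> N \<Longrightarrow> Adm n (N - length l + 1) (int N) (2 * int N - int (length l)) (E N (l::'n::finite list))"
proof (induction N arbitrary: n l)
  case 0
  hence "l = []" by simp
  moreover have "E 0 [] = (\<lambda>(\<Phi>::real^'n \<Rightarrow> real) x. 1)" by (intro ext) simp
  ultimately show ?case using Adm_one by simp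
next
  case (Suc N)
  define T1 where "T1 = (\<lambda>(\<Phi>::real^'n \<Rightarrow> real) x. - (\<Sum>i\<in>UNIV. pd i (\<lambda>y. Acoef \<Phi> i y * E N l \<Phi> y) x))"
  define T2 where "T2 = (\<lambda>(\<Phi>::real^'n \<Rightarrow> real) x. - (case l of [] \<Rightarrow> 0 | j # l' \<Rightarrow> Acoef \<Phi> j x * E N l' \<Phi> x))"
  have eqE: "E (Suc N) l = (\<lambda>\<Phi> x. T1 \<Phi> x + T2 \<Phi> x)"
    by (intro ext) (simp add: T1_def T2_def)
  let ?s = "Suc N - length l + 1" and ?a = "int (Suc N)" and ?b = "2 * int (Suc N) - int (length l)"
  have A1: "Adm n ?s ?a ?b T1"
  proof (cases "length l \<le> N")
    case True
    have "Adm n ?s ?a ?b (\<lambda>\<Phi> x. pd i (\<lambda>y. Acoef \<Phi> i y * E N l \<Phi> y) x)" for i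
    proof -
      have m: "Adm (Suc n) (max 1 (N - length l + 1)) (1 + int N) (1 + (2 * int N - int (length l)))
          (\<lambda>\<Phi> y. Acoef \<Phi> i y * E N l \<Phi> y)"
        by (rule Adm_mult[OF Adm_A Suc.IH[OF True]])
      have "Adm n (max 1 (N - length l + 1) + 1) (1 + int N) (1 + (2 * int N - int (length l)) + 1)
          (\<lambda>\<Phi>. pd i (\<lambda>y. Acoef \<Phi> i y * E N l \<Phi> y))"
        by (rule Adm_pd[OF m])
      thus ?thesis by (rule Adm_weaken) (use True in auto)
    qed
    hence "Adm n ?s ?a ?b (\<lambda>\<Phi> x. \<Sum>i\<in>UNIV. pd i (\<lambda>y. Acoef \<Phi> i y * E N l \<Phi> y) x)"
      by (intro Adm_sum) auto
    thus ?thesis unfolding T1_def by (rule Adm_minus)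
  next
    case False
    hence "T1 = (\<lambda>\<Phi> x. 0)" unfolding T1_def by (intro ext) (simp add: E_zero pd_const)
    thus ?thesis using Adm_zero by simp
  qed
  have A2: "Adm n ?s ?a ?b T2"
  proof (cases l)
    case Nil
    hence "T2 = (\<lambda>\<Phi> x. 0)" unfolding T2_def by (intro ext) simp
    thus ?thesis using Adm_zero by simp
  next
    case (Cons j l')
    hence len: "length l' \<le> N" using Suc.prems by simp
    have m: "Adm n (max 1 (N - length l' + 1)) (1 + int N) (1 + (2 * int N - int (length l')))
          (\<lambda>\<Phi> x. Acoef \<Phi> j x * E N l' \<Phi> x)"
      by (rule Adm_mult[OF Adm_A Suc.IH[OF len]])
    have "Adm n ?s ?a ?b (\<lambda>\<Phi> x. Acoef \<Phi> j x * E N l' \<Phi> x)"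
      by (rule Adm_weaken[OF m]) (use Cons len in auto)
    hence "Adm n ?s ?a ?b (\<lambda>\<Phi> x. - (Acoef \<Phi> j x * E N l' \<Phi> x))" by (rule Adm_minus)
    thus ?thesis unfolding T2_def using Cons by simp
  qed
  show ?case unfolding eqE by (rule Adm_add[OF A1 A2])
qed


lemma Ls_0: "Ls 0 = {[]}"
  unfolding Ls_def by auto

lemma smooth_AE:
  assumes "smooth_on UNIV \<Phi>" "l \<in> Ls N"
  shows "smooth_on (Gs \<Phi>) (\<lambda>y. Acoef \<Phi> i y * E N l \<Phi> y)"
proof -
  have "length l \<le> N" using assms(2) by (simp add: Ls_def)
  from Adm_mult[OF Adm_A[of 0 i] Adm_E[OF this, of 0]]
  have "SmG (\<lambda>\<Phi> y. Acoef \<Phi> i y * E N l \<Phi> y)" by (rule SmG_Adm)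
  thus ?thesis using assms(1) SmG_D by blast
qed

lemma Ls_Suc_split:
  "Ls (Suc N) - (\<lambda>(j, l). j # l) ` (UNIV \<times> Ls N) \<subseteq> {[]}"
proof
  fix m assume m: "m \<in> Ls (Suc N) - (\<lambda>(j, l). j # l) ` (UNIV \<times> Ls N)"
  show "m \<in> {[]}"
  proof (cases m)
    case (Cons j l)
    hence "l \<in> Ls N" using m by (simp add: Ls_def)
    hence "m \<in> (\<lambda>(j, l). j # l) ` (UNIV \<times> Ls N)" using Cons by force
    thus ?thesis using m by blast
  qed simp
qed

lemma tL_expand:
  fixes \<Phi> :: "real^'n::finite \<Rightarrow> real"
  assumes "smooth_on UNIV \<Phi>" "smooth_on UNIV u" "x \<in> Gs \<Phi>"
  shows "(tL \<Phi> ^^ N) u x = (\<Sum>l\<in>Ls N. E N l \<Phi> x * pderivs l u x)"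
  using assms(3)
proof (induction N arbitrary: x)
  case 0 thus ?case by (simp add: Ls_0)
next
  case (Suc N)
  have opn: "open (Gs \<Phi>)" by (rule open_Gs[OF assms(1)])
  define D where "D = (\<lambda>l. pderivs l u x)"
  define P where "P = (\<lambda>i l. pd i (\<lambda>y. Acoef \<Phi> i y * E N l \<Phi> y) x)"
  define Q where "Q = (\<lambda>i l. Acoef \<Phi> i x * E N l \<Phi> x)"
  have step: "pd i (\<lambda>y. Acoef \<Phi> i y * (tL \<Phi> ^^ N) u y) x
      = (\<Sum>l\<in>Ls N. P i l * D l + Q i l * D (i # l))" for i
  proof -
    have "pd i (\<lambda>y. Acoef \<Phi> i y * (tL \<Phi> ^^ N) u y) x
        = pd i (\<lambda>y. \<Sum>l\<in>Ls N. (Acoef \<Phi> i y * E N l \<Phi> y) * pderivs l u y) x"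
    proof (rule pd_local[OF opn Suc.prems])
      fix y assume "y \<in> Gs \<Phi>"
      thus "Acoef \<Phi> i y * (tL \<Phi> ^^ N) u y = (\<Sum>l\<in>Ls N. (Acoef \<Phi> i y * E N l \<Phi> y) * pderivs l u y)"
        using Suc.IH by (simp add: sum_distrib_left ac_simps)
    qed
    also have "\<dots> = (\<Sum>l\<in>Ls N. pd i (\<lambda>y. (Acoef \<Phi> i y * E N l \<Phi> y) * pderivs l u y) x)"
    proof (rule pd_sum[THEN conjunct1, OF finite_Ls])
      fix l :: "'n list" assume l: "l \<in> Ls N"
      show "ldiff (\<lambda>y. Acoef \<Phi> i y * E N l \<Phi> y * pderivs l u y) x i"
        by (rule pd_mult[THEN conjunct2]) (auto intro: smooth_ldiff[OF smooth_AE[OF assms(1) l] Suc.prems]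
             smooth_ldiff[OF smooth_pderivs[OF assms(2)]])
    qed
    also have "\<dots> = (\<Sum>l\<in>Ls N. P i l * D l + Q i l * D (i # l))"
    proof (rule sum.cong[OF refl])
      fix l :: "'n list" assume l: "l \<in> Ls N"
      have l1: "ldiff (\<lambda>y. Acoef \<Phi> i y * E N l \<Phi> y) x i"
        by (rule smooth_ldiff[OF smooth_AE[OF assms(1) l] Suc.prems])
      have l2: "ldiff (pderivs l u) x i" by (rule smooth_ldiff[OF smooth_pderivs[OF assms(2)]]) simp
      show "pd i (\<lambda>y. (Acoef \<Phi> i y * E N l \<Phi> y) * pderivs l u y) x = P i l * D l + Q i l * D (i # l)"
        using pd_mult[OF l1 l2] unfolding P_def Q_def D_def by simp
    qed
    finally show ?thesis .
  qed
  have lhs: "(tL \<Phi> ^^ Suc N) u x = - (\<Sum>i\<in>UNIV. \<Sum>l\<in>Ls N. P i l * D l) - (\<Sum>i\<in>UNIV. \<Sum>l\<in>Ls N. Q i l * D (i # l))"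
    using step by (simp add: tL_def sum.distrib)
  define C where "C = (\<lambda>m. case m of [] \<Rightarrow> 0 | j # l' \<Rightarrow> Acoef \<Phi> j x * E N l' \<Phi> x)"
  have rhs: "(\<Sum>m\<in>Ls (Suc N). E (Suc N) m \<Phi> x * pderivs m u x)
     = - (\<Sum>m\<in>Ls (Suc N). \<Sum>i\<in>UNIV. pd i (\<lambda>y. Acoef \<Phi> i y * E N m \<Phi> y) x * D m) - (\<Sum>m\<in>Ls (Suc N). C m * D m)"
    unfolding C_def D_def by (simp add: sum_distrib_right sum_distrib_left sum_subtractf sum_negf algebra_simps)
  have part1: "(\<Sum>m\<in>Ls (Suc N). \<Sum>i\<in>UNIV. pd i (\<lambda>y. Acoef \<Phi> i y * E N m \<Phi> y) x * D m)
      = (\<Sum>i\<in>UNIV. \<Sum>l\<in>Ls N. P i l * D l)"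
  proof -
    have "(\<Sum>m\<in>Ls (Suc N). \<Sum>i\<in>UNIV. pd i (\<lambda>y. Acoef \<Phi> i y * E N m \<Phi> y) x * D m)
        = (\<Sum>m\<in>Ls N. \<Sum>i\<in>UNIV. pd i (\<lambda>y. Acoef \<Phi> i y * E N m \<Phi> y) x * D m)"
    proof (rule sum.mono_neutral_right[OF finite_Ls])
      show "Ls N \<subseteq> Ls (Suc N)" by (auto simp: Ls_def)
      show "\<forall>m\<in>Ls (Suc N) - Ls N. (\<Sum>i\<in>UNIV. pd i (\<lambda>y. Acoef \<Phi> i y * E N m \<Phi> y) x * D m) = 0"
        by (auto simp: Ls_def E_zero pd_const)
    qed
    also have "\<dots> = (\<Sum>i\<in>UNIV. \<Sum>l\<in>Ls N. P i l * D l)"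
      unfolding P_def by (rule sum.swap)
    finally show ?thesis .
  qed
  have part2: "(\<Sum>m\<in>Ls (Suc N). C m * D m) = (\<Sum>i\<in>UNIV. \<Sum>l\<in>Ls N. Q i l * D (i # l))"
  proof -
    have "(\<Sum>m\<in>Ls (Suc N). C m * D m) = (\<Sum>m\<in>(\<lambda>(j, l). j # l) ` (UNIV \<times> Ls N). C m * D m)"
    proof (rule sum.mono_neutral_right[OF finite_Ls])
      show "(\<lambda>(j, l). j # l) ` (UNIV \<times> Ls N) \<subseteq> Ls (Suc N)" by (auto simp: Ls_def)
      show "\<forall>m\<in>Ls (Suc N) - (\<lambda>(j, l). j # l) ` (UNIV \<times> Ls N). C m * D m = 0"
      proof
        fix m :: "'n list" assume "m \<in> Ls (Suc N) - (\<lambda>(j, l). j # l) ` (UNIV \<times> Ls N)"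
        hence "m = []" using Ls_Suc_split[of N] by blast
        thus "C m * D m = 0" by (simp add: C_def)
      qed
    qed
    also have "\<dots> = (\<Sum>p\<in>UNIV \<times> Ls N. C (fst p # snd p) * D (fst p # snd p))"
      by (subst sum.reindex) (auto simp: inj_on_def case_prod_beta)
    also have "\<dots> = (\<Sum>i\<in>UNIV. \<Sum>l\<in>Ls N. C (i # l) * D (i # l))"
      unfolding sum.cartesian_product by (simp add: split_def)
    also have "\<dots> = (\<Sum>i\<in>UNIV. \<Sum>l\<in>Ls N. Q i l * D (i # l))"
      unfolding C_def Q_def by simp
    finally show ?thesis .
  qed
  show ?case unfolding lhs using rhs part1 part2 unfolding D_def by simp
qed


lemma PP_nat:
  assumes "r > 0"
  shows "PP (int a) (int b) r = (\<Sum>k = a..b. 1 / r ^ k)"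
proof -
  have "PP (int a) (int b) r = (\<Sum>k\<in>int ` {a..b}. (1/r) powi k)"
    unfolding PP_def image_int_atLeastAtMost ..
  also have "\<dots> = (\<Sum>k = a..b. (1/r) powi (int k))"
    by (subst sum.reindex) (auto simp: inj_on_def)
  also have "\<dots> = (\<Sum>k = a..b. 1 / r ^ k)" by (simp add: power_one_over)
  finally show ?thesis .
qed

definition cc :: "nat \<Rightarrow> (real^'n::finite \<Rightarrow> real) \<Rightarrow> ('n \<Rightarrow> nat) \<Rightarrow> real^'n \<Rightarrow> real" where
  "cc N \<Phi> \<alpha> x = (\<Sum>l\<in>{l\<in>Ls N. cnt l = \<alpha>}. E N l \<Phi> x)"

lemma Adm_cc:
  assumes "mlen \<alpha> \<le> N"
  shows "Adm n (N - mlen \<alpha> + 1) (int N) (2 * int N - int (mlen \<alpha>)) (\<lambda>\<Phi>. cc N \<Phi> (\<alpha>::'n::finite \<Rightarrow> nat))"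
proof -
  have "Adm n (N - mlen \<alpha> + 1) (int N) (2 * int N - int (mlen \<alpha>)) (\<lambda>\<Phi> x. \<Sum>l\<in>{l\<in>Ls N. cnt l = \<alpha>}. E N l \<Phi> x)"
  proof (rule Adm_sum)
    show "finite {l \<in> Ls N. cnt l = \<alpha>}" by (rule finite_subset[OF _ finite_Ls]) auto
    fix l :: "'n list" assume "l \<in> {l \<in> Ls N. cnt l = \<alpha>}"
    hence l: "length l \<le> N" "length l = mlen \<alpha>" by (auto simp: Ls_def mlen_cnt[symmetric])
    show "Adm n (N - mlen \<alpha> + 1) (int N) (2 * int N - int (mlen \<alpha>)) (E N l)"
      using Adm_E[OF l(1)] l(2) by simp
  qed
  thus ?thesis unfolding cc_def[abs_def] .
qed

lemma expand_dpart:
  fixes \<Phi> :: "real^'n::finite \<Rightarrow> real"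
  assumes "smooth_on UNIV \<Phi>" "smooth_on UNIV u" "x \<in> Gs \<Phi>"
  shows "(tL \<Phi> ^^ N) u x = (\<Sum>\<alpha>\<in>{\<alpha>. mlen \<alpha> \<le> N}. cc N \<Phi> \<alpha> x * dpart \<alpha> u x)"
proof -
  have "(tL \<Phi> ^^ N) u x = (\<Sum>l\<in>Ls N. E N l \<Phi> x * dpart (cnt l) u x)"
    unfolding tL_expand[OF assms] using pderivs_dpart[OF open_UNIV assms(2)] by simp
  also have "\<dots> = (\<Sum>\<alpha>\<in>{\<alpha>. mlen \<alpha> \<le> N}. \<Sum>l\<in>{l. l \<in> Ls N \<and> cnt l = \<alpha>}. E N l \<Phi> x * dpart (cnt l) u x)"
    by (rule sum.group[symmetric, OF finite_Ls finite_mlen_le]) (auto simp: Ls_def mlen_cnt)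
  also have "\<dots> = (\<Sum>\<alpha>\<in>{\<alpha>. mlen \<alpha> \<le> N}. cc N \<Phi> \<alpha> x * dpart \<alpha> u x)"
  proof (rule sum.cong[OF refl])
    fix \<alpha> :: "'n \<Rightarrow> nat"
    have "(\<Sum>l\<in>{l. l \<in> Ls N \<and> cnt l = \<alpha>}. E N l \<Phi> x * dpart (cnt l) u x)
        = (\<Sum>l\<in>{l. l \<in> Ls N \<and> cnt l = \<alpha>}. E N l \<Phi> x * dpart \<alpha> u x)"
      by (rule sum.cong) auto
    thus "(\<Sum>l\<in>{l. l \<in> Ls N \<and> cnt l = \<alpha>}. E N l \<Phi> x * dpart (cnt l) u x) = cc N \<Phi> \<alpha> x * dpart \<alpha> u x"
      unfolding cc_def by (simp add: sum_distrib_right)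
  qed
  finally show ?thesis .
qed

theorem lemma4:
  fixes N :: nat
  shows "\<exists>c :: (real^'n::finite \<Rightarrow> real) \<Rightarrow> ('n \<Rightarrow> nat) \<Rightarrow> real^'n \<Rightarrow> real.
    (\<forall>\<Phi>. smooth_on UNIV \<Phi> \<longrightarrow>
       (\<forall>\<alpha>. mlen \<alpha> \<le> N \<longrightarrow> smooth_on {x. grad \<Phi> x \<noteq> 0} (c \<Phi> \<alpha>)) \<and>
       (\<forall>u. smooth_on UNIV u \<longrightarrow>
          (\<forall>x. grad \<Phi> x \<noteq> 0 \<longrightarrow>
             (tL \<Phi> ^^ N) u x = (\<Sum>\<alpha>\<in>{\<alpha>. mlen \<alpha> \<le> N}. c \<Phi> \<alpha> x * dpart \<alpha> u x)))) \<and>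
    (\<forall>\<alpha> \<beta>. mlen \<alpha> \<le> N \<longrightarrow>
       (\<exists>F :: real \<Rightarrow> real. mono_on {0..} F \<and> (\<forall>t\<ge>0. F t \<ge> 0) \<and>
          (\<forall>\<Phi> V. smooth_on UNIV \<Phi> \<longrightarrow> open V \<longrightarrow>
             MM_finite \<Phi> V (N - mlen \<alpha> + mlen \<beta> + 1) \<longrightarrow>
             (\<forall>\<xi>\<in>V. grad \<Phi> \<xi> \<noteq> 0 \<longrightarrow>
                \<bar>dpart \<beta> (c \<Phi> \<alpha>) \<xi>\<bar> \<le>
                  F (MM \<Phi> V (N - mlen \<alpha> + mlen \<beta> + 1)) *
                  (\<Sum>k = N..2 * N - mlen \<alpha> + mlen \<beta>. 1 / norm (grad \<Phi> \<xi>) ^ k)))))"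
proof (rule exI[of _ "cc N"], intro conjI allI impI)
  fix \<Phi> :: "real^'n \<Rightarrow> real" and \<alpha> :: "'n \<Rightarrow> nat"
  assume h: "smooth_on UNIV \<Phi>" "mlen \<alpha> \<le> N"
  show "smooth_on {x. grad \<Phi> x \<noteq> 0} (cc N \<Phi> \<alpha>)"
    using SmG_D[OF SmG_Adm[OF Adm_cc[OF h(2), of 0]] h(1)] unfolding Gs_def .
next
  fix \<Phi> u :: "real^'n \<Rightarrow> real" and x
  assume h: "smooth_on UNIV \<Phi>" "smooth_on UNIV u" "grad \<Phi> x \<noteq> 0"
  show "(tL \<Phi> ^^ N) u x = (\<Sum>\<alpha>\<in>{\<alpha>. mlen \<alpha> \<le> N}. cc N \<Phi> \<alpha> x * dpart \<alpha> u x)"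
    by (rule expand_dpart[OF h(1,2)]) (simp add: Gs_def h(3))
next
  fix \<alpha> \<beta> :: "'n \<Rightarrow> nat"
  assume ha: "mlen \<alpha> \<le> N"
  have B: "Bnd (N - mlen \<alpha> + 1) (int N) (2 * int N - int (mlen \<alpha>)) (midx_list \<beta>) (\<lambda>\<Phi>. cc N \<Phi> \<alpha>)"
    by (rule Adm_Bnd[OF Adm_cc[OF ha, of "mlen \<beta>"]]) (simp add: length_midx_list)
  obtain F where F: "mono_on {0..} F" "\<And>t. t \<ge> 0 \<Longrightarrow> 0 \<le> F t"
    "\<And>(\<Phi>::real^'n \<Rightarrow> real) V \<xi>. smooth_on UNIV \<Phi> \<Longrightarrow> MM_finite \<Phi> V (N - mlen \<alpha> + 1 + length (midx_list \<beta>)) \<Longrightarrow> \<xi> \<in> V \<Longrightarrow> \<xi> \<in> Gs \<Phi> \<Longrightarrow>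
        \<bar>pderivs (midx_list \<beta>) (cc N \<Phi> \<alpha>) \<xi>\<bar> \<le> F (MM \<Phi> V (N - mlen \<alpha> + 1 + length (midx_list \<beta>))) * PP (int N) (2 * int N - int (mlen \<alpha>) + int (length (midx_list \<beta>))) (norm (grad \<Phi> \<xi>))"
    using BndE[OF B] by metis
  have e1: "N - mlen \<alpha> + 1 + length (midx_list \<beta>) = N - mlen \<alpha> + mlen \<beta> + 1"
    by (simp add: length_midx_list)
  have e2: "2 * int N - int (mlen \<alpha>) + int (length (midx_list \<beta>)) = int (2 * N - mlen \<alpha> + mlen \<beta>)"
    using ha by (simp add: length_midx_list of_nat_diff)
  show "\<exists>F :: real \<Rightarrow> real. mono_on {0..} F \<and> (\<forall>t\<ge>0. F t \<ge> 0) \<and>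
          (\<forall>\<Phi> V. smooth_on UNIV \<Phi> \<longrightarrow> open V \<longrightarrow>
             MM_finite \<Phi> V (N - mlen \<alpha> + mlen \<beta> + 1) \<longrightarrow>
             (\<forall>\<xi>\<in>V. grad \<Phi> \<xi> \<noteq> 0 \<longrightarrow>
                \<bar>dpart \<beta> (cc N \<Phi> \<alpha>) \<xi>\<bar> \<le>
                  F (MM \<Phi> V (N - mlen \<alpha> + mlen \<beta> + 1)) *
                  (\<Sum>k = N..2 * N - mlen \<alpha> + mlen \<beta>. 1 / norm (grad \<Phi> \<xi>) ^ k)))"
  proof (intro exI[of _ F] conjI allI impI ballI)
    show "mono_on {0..} F" by (rule F(1))
    show "\<And>t. 0 \<le> t \<Longrightarrow> 0 \<le> F t" by (rule F(2))
    fix \<Phi> :: "real^'n \<Rightarrow> real" and V \<xi>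
    assume h: "smooth_on UNIV \<Phi>" "open V" "MM_finite \<Phi> V (N - mlen \<alpha> + mlen \<beta> + 1)" "\<xi> \<in> V" "grad \<Phi> \<xi> \<noteq> 0"
    have g: "\<xi> \<in> Gs \<Phi>" using h(5) by (simp add: Gs_def)
    have r: "norm (grad \<Phi> \<xi>) > 0" using h(5) by simp
    have "\<bar>dpart \<beta> (cc N \<Phi> \<alpha>) \<xi>\<bar> = \<bar>pderivs (midx_list \<beta>) (cc N \<Phi> \<alpha>) \<xi>\<bar>" by (simp add: dpart_def)
    also have "\<dots> \<le> F (MM \<Phi> V (N - mlen \<alpha> + mlen \<beta> + 1)) * PP (int N) (int (2 * N - mlen \<alpha> + mlen \<beta>)) (norm (grad \<Phi> \<xi>))"
      using F(3)[OF h(1) _ h(4) g] h(3) unfolding e1 e2 by blast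
    also have "\<dots> = F (MM \<Phi> V (N - mlen \<alpha> + mlen \<beta> + 1)) * (\<Sum>k = N..2 * N - mlen \<alpha> + mlen \<beta>. 1 / norm (grad \<Phi> \<xi>) ^ k)"
      unfolding PP_nat[OF r] ..
    finally show "\<bar>dpart \<beta> (cc N \<Phi> \<alpha>) \<xi>\<bar> \<le> F (MM \<Phi> V (N - mlen \<alpha> + mlen \<beta> + 1)) * (\<Sum>k = N..2 * N - mlen \<alpha> + mlen \<beta>. 1 / norm (grad \<Phi> \<xi>) ^ k)" .
  qed
qed


end
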